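(* Let $(F_S,\iota)$ be an embedded local étale algebra and $\Gamma\subseteq\mathrm{PGL}_2(F_S)$ a semi-simple plectic subgroup. Then the action of $\Gamma$ on $\mathcal T_\Gamma$ is proper: the stabilizer in $\Gamma$ of each polysimplex $\sigma$ of $\mathcal T_\Gamma$ is finite.
   Context: Fix a prime $p$ and let $\mathbf{C}$ be the completion of an algebraic closure of $\mathbb{Q}_p$ or of $\mathbb{F}_p((T))$. An embedded local étale algebra $(F_S,\iota)$ consists of a finite non-empty set $S$, non-Archimedean local fields $F_\mathfrak p$ ($\mathfrak p\in S$) of residue characteristic $p$ and the same characteristic as $\mathbf C$, and embeddings $\iota_\mathfrak p\colon F_\mathfrak p\hookrightarrow\mathbf C$ (so $\mathbb P^1(F_\mathfrak p)\subseteq\mathbb P^1(\mathbf C)$). $\mathrm{PGL}_2(F_S)=\prod_\mathfrak p\mathrm{PGL}_2(F_\mathfrak p)$ acts componentwise by Möbius transformations on $\prod_{\mathfrak p\in S}\mathbb P^1(\mathbf C)$. The limit set $\mathcal L^S_\Gamma$ of a subgroup $\Gamma$ is the set of $x$ with $\gamma_j(y)\to x$ for some $y$ and pairwise distinct $\gamma_j\in\Gamma$. $\Gamma$ is plectic if $\mathcal L^S_\Gamma=\bigcup_\mathfrak p\big(\mathcal L_{\Gamma,\mathfrak p}\times\prod_{\mathfrak q\ne\mathfrak p}\mathbb P^1(\mathbf C)\big)$ for some subsets $\mathcal L_{\Gamma,\mathfrak p}\subseteq\mathbb P^1(F_\mathfrak p)$, and semi-simple if moreover no $\mathcal L_{\Gamma,\mathfrak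 p}$ has exactly one element. For such $\Gamma$, $\mathcal T_{\Gamma,\mathfrak p}$ is a single vertex if $\mathcal L_{\Gamma,\mathfrak p}=\emptyset$, and otherwise the subtree of the Bruhat–Tits tree of $\mathrm{PGL}_2(F_\mathfrak p)$ (ends identified with $\mathbb P^1(F_\mathfrak p)$) formed by the union of all geodesics joining two distinct points of $\mathcal L_{\Gamma,\mathfrak p}$; it is stable under $\mathrm{pr}_\mathfrak p(\Gamma)$, and $\Gamma$ acts on the polysimplicial complex $\mathcal T_\Gamma=\prod_{\mathfrak p\in S}\mathcal T_{\Gamma,\mathfrak p}$, whose polysimplices are products of vertices and edges of the factors. *)

theory Defs
  imports Complex_Main "HOL-Computational_Algebra.Polynomial"
begin

definition nonarch_abs :: "('c::field \<Rightarrow> real) \<Rightarrow> bool" where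
  "nonarch_abs nv \<longleftrightarrow> nv 0 = 0 \<and> (\<forall>x. x \<noteq> 0 \<longrightarrow> nv x > 0)
     \<and> (\<forall>x y. nv (x * y) = nv x * nv y) \<and> (\<forall>x y. nv (x + y) \<le> max (nv x) (nv y))"

definition v_complete :: "('c::field \<Rightarrow> real) \<Rightarrow> bool" where
  "v_complete nv \<longleftrightarrow> (\<forall>X::nat \<Rightarrow> 'c.
     (\<forall>e>0. \<exists>N. \<forall>m\<ge>N. \<forall>n\<ge>N. nv (X m - X n) < e) \<longrightarrow>
     (\<exists>L. \<forall>e>0. \<exists>N. \<forall>n\<ge>N. nv (X n - L) < e))"

definition v_closure :: "('c::field \<Rightarrow> real) \<Rightarrow> 'c set \<Rightarrow> 'c set" where
  "v_closure nv A = {x. \<forall>e>0. \<exists>a\<in>A. nv (x - a) < e}"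

definition algebraic_over :: "'c::field set \<Rightarrow> 'c \<Rightarrow> bool" where
  "algebraic_over K x \<longleftrightarrow> (\<exists>f. f \<noteq> 0 \<and> (\<forall>i. coeff f i \<in> K) \<and> poly f x = 0)"

text \<open>C is (up to isometric isomorphism) the completion of an algebraic closure of
  Q_p (char 0, t = 1: K0 is the closure of Q, i.e. Q_p) or of F_p((t)) (char p):
  complete, algebraically closed, and the algebraic closure of K0 inside C is dense.\<close>

definition is_C :: "('c::field \<Rightarrow> real) \<Rightarrow> nat \<Rightarrow> bool" where
  "is_C nv p \<longleftrightarrow> prime p \<and> nonarch_abs nv \<and> v_complete nv
     \<and> (\<forall>f::'c poly. degree f > 0 \<longrightarrow> (\<exists>z. poly f z = 0))
     \<and> (\<exists>t. ((CHAR('c) = 0 \<and> t = 1 \<and> nv (of_nat p) < 1)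
              \<or> (CHAR('c) = p \<and> 0 < nv t \<and> nv t < 1))
         \<and> (let K0 = v_closure nv {poly f t / poly g t | f g.
                   (\<forall>i. coeff f i \<in> range of_int) \<and> (\<forall>i. coeff g i \<in> range of_int)}
            in \<forall>x. \<forall>e>0. \<exists>y. algebraic_over K0 y \<and> nv (x - y) < e))"

section \<open>Non-Archimedean local fields embedded in C (as closed subfields)\<close>

definition subfield :: "'c::field set \<Rightarrow> bool" where
  "subfield F \<longleftrightarrow> 0 \<in> F \<and> 1 \<in> F \<and> (\<forall>x\<in>F. \<forall>y\<in>F. x + y \<in> F \<and> x * y \<in> F)
     \<and> (\<forall>x\<in>F. - x \<in> F) \<and> (\<forall>x\<in>F. x \<noteq> 0 \<longrightarrow> inverse x \<in> F)"

definition v_closed :: "('c::field \<Rightarrow> real) \<Rightarrow> 'c set \<Rightarrow> bool" where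
  "v_closed nv F \<longleftrightarrow> v_closure nv F \<subseteq> F"

definition integers :: "('c::field \<Rightarrow> real) \<Rightarrow> 'c set \<Rightarrow> 'c set" where
  "integers nv F = {x \<in> F. nv x \<le> 1}"

definition uniformizer :: "('c::field \<Rightarrow> real) \<Rightarrow> 'c set \<Rightarrow> 'c \<Rightarrow> bool" where
  "uniformizer nv F \<pi> \<longleftrightarrow> \<pi> \<in> F \<and> 0 < nv \<pi> \<and> nv \<pi> < 1
     \<and> (\<forall>x\<in>F. x \<noteq> 0 \<longrightarrow> (\<exists>n::int. nv x = nv \<pi> powi n))"

text \<open>A non-Archimedean local field (continuously) embedded into C: a closed subfield,
  discretely valued, with finite residue field.\<close>
definition local_subfield :: "('c::field \<Rightarrow> real) \<Rightarrow> 'c set \<Rightarrow> bool" where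
  "local_subfield nv F \<longleftrightarrow> subfield F \<and> v_closed nv F \<and> (\<exists>\<pi>. uniformizer nv F \<pi>)
     \<and> (\<exists>R. finite R \<and> R \<subseteq> integers nv F \<and>
            (\<forall>x\<in>integers nv F. \<exists>r\<in>R. nv (x - r) < 1))"

text \<open>P^1(C) is 'c option, None being the point at infinity.\<close>
definition P1 :: "'c set \<Rightarrow> 'c option set" where
  "P1 F = insert None (Some ` F)"

type_synonym 'c mat2 = "'c \<times> 'c \<times> 'c \<times> 'c"

fun mmul :: "'c::field mat2 \<Rightarrow> 'c mat2 \<Rightarrow> 'c mat2" where
  "mmul (a,b,c,d) (e,f,g,h) = (a*e+b*g, a*f+b*h, c*e+d*g, c*f+d*h)"

fun mdet :: "'c::field mat2 \<Rightarrow> 'c" where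
  "mdet (a,b,c,d) = a*d - b*c"

fun madj :: "'c::field mat2 \<Rightarrow> 'c mat2" where
  "madj (a,b,c,d) = (d, -b, -c, a)"

fun msmul :: "'c::field \<Rightarrow> 'c mat2 \<Rightarrow> 'c mat2" where
  "msmul l (a,b,c,d) = (l*a, l*b, l*c, l*d)"

definition gl2 :: "'c::field set \<Rightarrow> 'c mat2 \<Rightarrow> bool" where
  "gl2 F M \<longleftrightarrow> (case M of (a,b,c,d) \<Rightarrow> a \<in> F \<and> b \<in> F \<and> c \<in> F \<and> d \<in> F) \<and> mdet M \<noteq> 0"

text \<open>An element of PGL_2(F) is the class of an invertible matrix modulo F^*.\<close>
definition pgl_class :: "'c::field set \<Rightarrow> 'c mat2 \<Rightarrow> 'c mat2 set" where
  "pgl_class F M = {msmul l M | l. l \<in> F \<and> l \<noteq> 0}"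

definition pgl2 :: "'c::field set \<Rightarrow> 'c mat2 set set" where
  "pgl2 F = {pgl_class F M | M. gl2 F M}"

text \<open>PGL_2(F_S) as functions on S (extensional: empty outside S).\<close>
definition pglS :: "'s set \<Rightarrow> ('s \<Rightarrow> 'c::field set) \<Rightarrow> ('s \<Rightarrow> 'c mat2 set) set" where
  "pglS S F = {g. (\<forall>s\<in>S. g s \<in> pgl2 (F s)) \<and> (\<forall>s. s \<notin> S \<longrightarrow> g s = {})}"

definition pgl_one :: "'s set \<Rightarrow> ('s \<Rightarrow> 'c::field set) \<Rightarrow> 's \<Rightarrow> 'c mat2 set" where
  "pgl_one S F = (\<lambda>s. if s \<in> S then pgl_class (F s) (1,0,0,1) else {})"

definition pgl_mult :: "('s \<Rightarrow> 'c::field mat2 set) \<Rightarrow> ('s \<Rightarrow> 'c mat2 set) \<Rightarrow> 's \<Rightarrow> 'c mat2 set" where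
  "pgl_mult g h = (\<lambda>s. {mmul M N | M N. M \<in> g s \<and> N \<in> h s})"

definition pgl_inv :: "('s \<Rightarrow> 'c::field mat2 set) \<Rightarrow> 's \<Rightarrow> 'c mat2 set" where
  "pgl_inv g = (\<lambda>s. madj ` g s)"

definition pgl_subgroup :: "'s set \<Rightarrow> ('s \<Rightarrow> 'c::field set) \<Rightarrow> ('s \<Rightarrow> 'c mat2 set) set \<Rightarrow> bool" where
  "pgl_subgroup S F \<Gamma> \<longleftrightarrow> \<Gamma> \<subseteq> pglS S F \<and> pgl_one S F \<in> \<Gamma>
     \<and> (\<forall>g\<in>\<Gamma>. \<forall>h\<in>\<Gamma>. pgl_mult g h \<in> \<Gamma>) \<and> (\<forall>g\<in>\<Gamma>. pgl_inv g \<in> \<Gamma>)"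

fun mob :: "'c::field mat2 \<Rightarrow> 'c option \<Rightarrow> 'c option" where
  "mob (a,b,c,d) None = (if c = 0 then None else Some (a / c))"
| "mob (a,b,c,d) (Some z) = (if c * z + d = 0 then None else Some ((a*z+b) / (c*z+d)))"

definition pmob :: "'c::field mat2 set \<Rightarrow> 'c option \<Rightarrow> 'c option" where
  "pmob g x = mob (SOME M. M \<in> g) x"

definition p1_tendsto :: "('c::field \<Rightarrow> real) \<Rightarrow> (nat \<Rightarrow> 'c option) \<Rightarrow> 'c option \<Rightarrow> bool" where
  "p1_tendsto nv X x \<longleftrightarrow> (case x of
      None \<Rightarrow> (\<forall>R. \<exists>N. \<forall>n\<ge>N. X n = None \<or> (\<exists>z. X n = Some z \<and> nv z > R))
    | Some a \<Rightarrow> (\<forall>e>0. \<exists>N. \<forall>n\<ge>N. \<exists>z. X n = Some z \<and> nv (z - a) < e))"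

text \<open>Limit set in prod_{s in S} P^1(C) (points as functions on S, None outside S);
  convergence in the product topology is componentwise.\<close>
definition limset :: "('c::field \<Rightarrow> real) \<Rightarrow> 's set \<Rightarrow> ('s \<Rightarrow> 'c mat2 set) set \<Rightarrow> ('s \<Rightarrow> 'c option) set" where
  "limset nv S \<Gamma> = {x. (\<forall>s. s \<notin> S \<longrightarrow> x s = None) \<and>
     (\<exists>y \<gamma>. inj (\<gamma> :: nat \<Rightarrow> 's \<Rightarrow> 'c mat2 set) \<and> range \<gamma> \<subseteq> \<Gamma> \<and>
        (\<forall>s\<in>S. p1_tendsto nv (\<lambda>j. pmob (\<gamma> j s) (y s)) (x s)))}"

definition semisimple_plectic_with ::
  "('c::field \<Rightarrow> real) \<Rightarrow> 's set \<Rightarrow> ('s \<Rightarrow> 'c set) \<Rightarrow> ('s \<Rightarrow> 'c mat2 set) set \<Rightarrow> ('s \<Rightarrow> 'c option set) \<Rightarrow> bool" where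
  "semisimple_plectic_with nv S F \<Gamma> Lp \<longleftrightarrow>
     (\<forall>s\<in>S. Lp s \<subseteq> P1 (F s)) \<and>
     limset nv S \<Gamma> = {x. (\<forall>s. s \<notin> S \<longrightarrow> x s = None) \<and> (\<exists>s\<in>S. x s \<in> Lp s)} \<and>
     (\<forall>s\<in>S. \<not> (\<exists>a. Lp s = {a}))"

section \<open>Bruhat--Tits tree of PGL_2(F) via homothety classes of lattices\<close>

definition vadd :: "'c::field \<times> 'c \<Rightarrow> 'c \<times> 'c \<Rightarrow> 'c \<times> 'c" where
  "vadd u w = (fst u + fst w, snd u + snd w)"

definition vscale :: "'c::field \<Rightarrow> 'c \<times> 'c \<Rightarrow> 'c \<times> 'c" where
  "vscale l u = (l * fst u, l * snd u)"

fun mapply :: "'c::field mat2 \<Rightarrow> 'c \<times> 'c \<Rightarrow> 'c \<times> 'c" where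
  "mapply (a,b,c,d) (x,y) = (a*x + b*y, c*x + d*y)"

text \<open>Ends of the tree are identified with P^1(F): z corresponds to the line through (z,1),
  infinity to the line through (1,0); compatible with mob.\<close>
fun pvec :: "'c::field option \<Rightarrow> 'c \<times> 'c" where
  "pvec None = (1, 0)"
| "pvec (Some z) = (z, 1)"

definition lat_span :: "('c::field \<Rightarrow> real) \<Rightarrow> 'c set \<Rightarrow> 'c \<times> 'c \<Rightarrow> 'c \<times> 'c \<Rightarrow> ('c \<times> 'c) set" where
  "lat_span nv F u w = {vadd (vscale a u) (vscale b w) | a b. a \<in> integers nv F \<and> b \<in> integers nv F}"

definition is_lattice :: "('c::field \<Rightarrow> real) \<Rightarrow> 'c set \<Rightarrow> ('c \<times> 'c) set \<Rightarrow> bool" where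
  "is_lattice nv F L \<longleftrightarrow> (\<exists>u w. u \<in> F \<times> F \<and> w \<in> F \<times> F \<and> fst u * snd w - snd u * fst w \<noteq> 0
      \<and> L = lat_span nv F u w)"

definition hclass :: "'c::field set \<Rightarrow> ('c \<times> 'c) set \<Rightarrow> ('c \<times> 'c) set set" where
  "hclass F L = {vscale l ` L | l. l \<in> F \<and> l \<noteq> 0}"

definition bt_vertex :: "('c::field \<Rightarrow> real) \<Rightarrow> 'c set \<Rightarrow> ('c \<times> 'c) set set \<Rightarrow> bool" where
  "bt_vertex nv F v \<longleftrightarrow> (\<exists>L. is_lattice nv F L \<and> v = hclass F L)"

definition bt_adjacent :: "('c::field \<Rightarrow> real) \<Rightarrow> 'c set \<Rightarrow> ('c \<times> 'c) set set \<Rightarrow> ('c \<times> 'c) set set \<Rightarrow> bool" where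
  "bt_adjacent nv F v w \<longleftrightarrow> bt_vertex nv F v \<and> bt_vertex nv F w \<and> v \<noteq> w \<and>
     (\<exists>L\<in>v. \<exists>L'\<in>w. \<exists>\<pi>. uniformizer nv F \<pi> \<and> vscale \<pi> ` L \<subset> L' \<and> L' \<subset> L)"

text \<open>Vertex v lies on the geodesic joining the ends a, b (a distinct from b): v is the class of
  a lattice O u + O w with u on the line of a and w on the line of b.\<close>
definition on_geod :: "('c::field \<Rightarrow> real) \<Rightarrow> 'c set \<Rightarrow> 'c option \<Rightarrow> 'c option \<Rightarrow> ('c \<times> 'c) set set \<Rightarrow> bool" where
  "on_geod nv F a b v \<longleftrightarrow> (\<exists>\<alpha> \<beta>. \<alpha> \<in> F \<and> \<alpha> \<noteq> 0 \<and> \<beta> \<in> F \<and> \<beta> \<noteq> 0 \<and>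
      v = hclass F (lat_span nv F (vscale \<alpha> (pvec a)) (vscale \<beta> (pvec b))))"

definition tree_verts :: "('c::field \<Rightarrow> real) \<Rightarrow> 'c set \<Rightarrow> 'c option set \<Rightarrow> ('c \<times> 'c) set set set" where
  "tree_verts nv F Ls = {v. \<exists>a\<in>Ls. \<exists>b\<in>Ls. a \<noteq> b \<and> on_geod nv F a b v}"

definition tree_edge :: "('c::field \<Rightarrow> real) \<Rightarrow> 'c set \<Rightarrow> 'c option set \<Rightarrow> ('c \<times> 'c) set set \<Rightarrow> ('c \<times> 'c) set set \<Rightarrow> bool" where
  "tree_edge nv F Ls v w \<longleftrightarrow> bt_adjacent nv F v w \<and>
     (\<exists>a\<in>Ls. \<exists>b\<in>Ls. a \<noteq> b \<and> on_geod nv F a b v \<and> on_geod nv F a b w)"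

definition pact :: "'c::field mat2 set \<Rightarrow> ('c \<times> 'c) set set \<Rightarrow> ('c \<times> 'c) set set" where
  "pact g v = {mapply M ` L | M L. M \<in> g \<and> L \<in> v}"

text \<open>A polysimplex of T_Gamma: for each s in S, the set of vertices of a vertex or an edge of
  T_{Gamma,s}; when Lp s is empty the factor is a single (abstract) vertex, encoded by {},
  on which Gamma acts trivially.\<close>
definition polysimplex :: "('c::field \<Rightarrow> real) \<Rightarrow> 's set \<Rightarrow> ('s \<Rightarrow> 'c set) \<Rightarrow> ('s \<Rightarrow> 'c option set)
     \<Rightarrow> ('s \<Rightarrow> ('c \<times> 'c) set set set) \<Rightarrow> bool" where
  "polysimplex nv S F Lp \<sigma> \<longleftrightarrow> (\<forall>s. s \<notin> S \<longrightarrow> \<sigma> s = {}) \<and>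
     (\<forall>s\<in>S. (Lp s = {} \<longrightarrow> \<sigma> s = {}) \<and>
        (Lp s \<noteq> {} \<longrightarrow> (\<exists>v. v \<in> tree_verts nv (F s) (Lp s) \<and> \<sigma> s = {v})
                       \<or> (\<exists>v w. tree_edge nv (F s) (Lp s) v w \<and> \<sigma> s = {v, w})))"

definition stabilizer :: "'s set \<Rightarrow> ('s \<Rightarrow> 'c::field mat2 set) set \<Rightarrow> ('s \<Rightarrow> 'c option set)
     \<Rightarrow> ('s \<Rightarrow> ('c \<times> 'c) set set set) \<Rightarrow> ('s \<Rightarrow> 'c mat2 set) set" where
  "stabilizer S \<Gamma> Lp \<sigma> = {g \<in> \<Gamma>. \<forall>s\<in>S. Lp s \<noteq> {} \<longrightarrow> pact (g s) ` \<sigma> s = \<sigma> s}"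

end

theory Submission
  imports Defs "HOL-Analysis.Abstract_Metric_Spaces" "HOL-Library.Infinite_Set"
begin

locale nav =
  fixes nv :: "'c::field \<Rightarrow> real"
  assumes NA: "nonarch_abs nv"
begin

lemma nv0[simp]: "nv 0 = 0" using NA unfolding nonarch_abs_def by auto
lemma nv_pos: "x \<noteq> 0 \<Longrightarrow> nv x > 0" using NA unfolding nonarch_abs_def by auto
lemma nv_mult: "nv (x * y) = nv x * nv y" using NA unfolding nonarch_abs_def by auto
lemma nv_max: "nv (x + y) \<le> max (nv x) (nv y)" using NA unfolding nonarch_abs_def by auto
lemma nv_ge0[simp]: "nv x \<ge> 0" using nv_pos[of x] by (cases "x = 0") auto
lemma nv_eq0[simp]: "nv x = 0 \<longleftrightarrow> x = 0" using nv_pos[of x] by (cases "x = 0") auto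

lemma nv1[simp]: "nv 1 = 1"
proof -
  have "nv 1 = nv 1 * nv 1" using nv_mult[of 1 1] by simp
  moreover have "nv 1 > 0" using nv_pos[of 1] by simp
  ultimately show ?thesis by simp
qed

lemma nv_m1: "nv (-1) = 1"
proof -
  have h: "nv (-1) * nv (-1) = 1" using nv_mult[of "-1" "-1"] by simp
  then have "(nv (-1))\<^sup>2 = 1\<^sup>2" by (simp add: power2_eq_square)
  then show ?thesis using power2_eq_iff_nonneg[of "nv (-1)" 1] nv_pos[of "-1"] by simp
qed

lemma nv_uminus[simp]: "nv (- x) = nv x"
  using nv_mult[of "-1" x] nv_m1 by simp

lemma nv_commute: "nv (x - y) = nv (y - x)"
  by (metis minus_diff_eq nv_uminus)

lemma nv_inverse: "nv (inverse x) = inverse (nv x)"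
proof (cases "x = 0")
  case False
  have "nv (x * inverse x) = 1" using False by simp
  then have "nv x * nv (inverse x) = 1" using nv_mult[of x "inverse x"] by simp
  then have "inverse (nv x) = nv (inverse x)" by (rule inverse_unique)
  then show ?thesis by simp
qed simp

lemma nv_divide: "nv (x / y) = nv x / nv y"
  by (simp add: divide_inverse nv_mult nv_inverse)

lemma nv_power: "nv (x ^ n) = nv x ^ n"
  by (induction n) (auto simp: nv_mult)

lemma nv_tri: "nv (x + y) \<le> nv x + nv y"
  using nv_max[of x y] nv_ge0[of x] nv_ge0[of y] by linarith

lemma nv_diff_tri: "nv (x - z) \<le> max (nv (x - y)) (nv (y - z))"
  using nv_max[of "x - y" "y - z"] by simp

lemma nv_diff_le: "\<bar>nv x - nv y\<bar> \<le> nv (x - y)"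
proof -
  have "nv x \<le> nv (x - y) + nv y" using nv_tri[of "x - y" y] by simp
  moreover have "nv y \<le> nv (y - x) + nv x" using nv_tri[of "y - x" x] by simp
  ultimately show ?thesis using nv_commute[of x y] by linarith
qed

lemma nv_eq_close: "nv (x - y) < nv y \<Longrightarrow> nv x = nv y"
proof -
  assume a: "nv (x - y) < nv y"
  have "nv x \<le> max (nv (x - y)) (nv y)" using nv_max[of "x - y" y] by simp
  moreover have "nv y \<le> max (nv (y - x)) (nv x)" using nv_max[of "y - x" x] by simp
  ultimately show ?thesis using a nv_commute[of x y] by linarith
qed

definition vlim :: "(nat \<Rightarrow> 'c) \<Rightarrow> 'c \<Rightarrow> bool" where
  "vlim X L \<longleftrightarrow> (\<forall>e>0. \<exists>N. \<forall>n\<ge>N. nv (X n - L) < e)"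

lemma vlim_const: "vlim (\<lambda>n. c) c"
  unfolding vlim_def by auto

lemma vlim_add: "vlim X L \<Longrightarrow> vlim Y K \<Longrightarrow> vlim (\<lambda>n. X n + Y n) (L + K)"
  unfolding vlim_def
proof (intro allI impI)
  fix e :: real assume x: "\<forall>e>0. \<exists>N. \<forall>n\<ge>N. nv (X n - L) < e" and
    y: "\<forall>e>0. \<exists>N. \<forall>n\<ge>N. nv (Y n - K) < e" and e: "e > 0"
  obtain N1 where N1: "\<forall>n\<ge>N1. nv (X n - L) < e" using x e by blast
  obtain N2 where N2: "\<forall>n\<ge>N2. nv (Y n - K) < e" using y e by blast
  show "\<exists>N. \<forall>n\<ge>N. nv (X n + Y n - (L + K)) < e"
  proof (intro exI allI impI)
    fix n assume "n \<ge> max N1 N2"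
    then have "nv (X n - L) < e" "nv (Y n - K) < e" using N1 N2 by auto
    moreover have "nv (X n + Y n - (L + K)) = nv ((X n - L) + (Y n - K))" by (simp add: algebra_simps)
    ultimately show "nv (X n + Y n - (L + K)) < e" using nv_max[of "X n - L" "Y n - K"] by linarith
  qed
qed

lemma vlim_uminus: "vlim X L \<Longrightarrow> vlim (\<lambda>n. - X n) (- L)"
  unfolding vlim_def by (metis minus_diff_eq minus_diff_minus nv_uminus)

lemma vlim_diff: "vlim X L \<Longrightarrow> vlim Y K \<Longrightarrow> vlim (\<lambda>n. X n - Y n) (L - K)"
  using vlim_add[of X L "\<lambda>n. - Y n" "- K"] vlim_uminus[of Y K] by simp

lemma vlim_bounded: "vlim X L \<Longrightarrow> \<exists>N. \<forall>n\<ge>N. nv (X n) \<le> max 1 (nv L)"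
proof -
  assume "vlim X L"
  then obtain N where N: "\<forall>n\<ge>N. nv (X n - L) < 1" unfolding vlim_def by force
  show ?thesis
  proof (intro exI allI impI)
    fix n assume "n \<ge> N"
    then have "nv (X n - L) < 1" using N by auto
    moreover have "nv (X n) \<le> max (nv (X n - L)) (nv L)" using nv_max[of "X n - L" L] by simp
    ultimately show "nv (X n) \<le> max 1 (nv L)" by linarith
  qed
qed

lemma vlim_mult: "vlim X L \<Longrightarrow> vlim Y K \<Longrightarrow> vlim (\<lambda>n. X n * Y n) (L * K)"
proof -
  assume x: "vlim X L" and y: "vlim Y K"
  obtain N0 where N0: "\<forall>n\<ge>N0. nv (Y n) \<le> max 1 (nv K)" using vlim_bounded[OF y] by blast
  define B where "B = max 1 (nv K)"
  define C where "C = nv L + 1"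
  have B: "B > 0" "B \<ge> 1" unfolding B_def by auto
  have C: "C > 0" unfolding C_def using nv_ge0[of L] by linarith
  show ?thesis unfolding vlim_def
  proof (intro allI impI)
    fix e :: real assume e: "e > 0"
    obtain N1 where N1: "\<forall>n\<ge>N1. nv (X n - L) < e / B" using x e B unfolding vlim_def by force
    obtain N2 where N2: "\<forall>n\<ge>N2. nv (Y n - K) < e / C" using y e C unfolding vlim_def by force
    show "\<exists>N. \<forall>n\<ge>N. nv (X n * Y n - L * K) < e"
    proof (intro exI allI impI)
      fix n assume n: "n \<ge> max N0 (max N1 N2)"
      have eq: "X n * Y n - L * K = (X n - L) * Y n + L * (Y n - K)" by (simp add: algebra_simps)
      have "nv ((X n - L) * Y n) = nv (X n - L) * nv (Y n)" by (simp add: nv_mult)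
      also have "\<dots> \<le> nv (X n - L) * B" using N0 n B_def by (intro mult_left_mono) auto
      also have "\<dots> < e / B * B" using N1 n B by (intro mult_strict_right_mono) auto
      also have "\<dots> = e" using B by simp
      finally have 1: "nv ((X n - L) * Y n) < e" .
      have "nv (L * (Y n - K)) = nv L * nv (Y n - K)" by (simp add: nv_mult)
      also have "\<dots> \<le> C * nv (Y n - K)" unfolding C_def by (intro mult_right_mono) auto
      also have "\<dots> < C * (e / C)" using N2 n C by (intro mult_strict_left_mono) auto
      also have "\<dots> = e" using C by simp
      finally have 2: "nv (L * (Y n - K)) < e" .
      show "nv (X n * Y n - L * K) < e" unfolding eq using 1 2 nv_max[of "(X n - L) * Y n" "L * (Y n - K)"] by linarith
    qed
  qed
qed

lemma vlim_eventually_nz: "vlim X L \<Longrightarrow> L \<noteq> 0 \<Longrightarrow> \<exists>N. \<forall>n\<ge>N. nv (X n) = nv L"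
proof -
  assume x: "vlim X L" and L: "L \<noteq> 0"
  then obtain N where N: "\<forall>n\<ge>N. nv (X n - L) < nv L" unfolding vlim_def using nv_pos[OF L] by blast
  show ?thesis
  proof (intro exI allI impI)
    fix n assume "n \<ge> N"
    then show "nv (X n) = nv L" using N by (intro nv_eq_close) auto
  qed
qed

lemma vlim_inverse: "vlim X L \<Longrightarrow> L \<noteq> 0 \<Longrightarrow> vlim (\<lambda>n. inverse (X n)) (inverse L)"
proof -
  assume x: "vlim X L" and L: "L \<noteq> 0"
  obtain N0 where N0: "\<forall>n\<ge>N0. nv (X n) = nv L" using vlim_eventually_nz[OF x L] by blast
  have pL: "nv L > 0" using nv_pos[OF L] .
  show ?thesis unfolding vlim_def
  proof (intro allI impI)
    fix e :: real assume e: "e > 0"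
    obtain N1 where N1: "\<forall>n\<ge>N1. nv (X n - L) < e * (nv L * nv L)" using x e pL unfolding vlim_def by force
    show "\<exists>N. \<forall>n\<ge>N. nv (inverse (X n) - inverse L) < e"
    proof (intro exI allI impI)
      fix n assume n: "n \<ge> max N0 N1"
      have XL: "nv (X n) = nv L" using N0 n by auto
      then have Xn: "X n \<noteq> 0" using pL by auto
      have "inverse (X n) - inverse L = (L - X n) / (X n * L)" using Xn L by (simp add: field_simps)
      then have "nv (inverse (X n) - inverse L) = nv (X n - L) / (nv L * nv L)"
        by (simp add: nv_divide nv_mult XL nv_commute)
      also have "\<dots> < e"
      proof -
        have pp: "nv L * nv L > 0" using pL by simp
        have "nv (X n - L) < e * (nv L * nv L)" using N1 n by auto
        then show ?thesis using pos_divide_less_eq[OF pp] by blast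
      qed
      finally show "nv (inverse (X n) - inverse L) < e" .
    qed
  qed
qed

lemma vlim_divide: "vlim X L \<Longrightarrow> vlim Y K \<Longrightarrow> K \<noteq> 0 \<Longrightarrow> vlim (\<lambda>n. X n / Y n) (L / K)"
  using vlim_mult[of X L "\<lambda>n. inverse (Y n)" "inverse K"] vlim_inverse[of Y K]
  by (simp add: divide_inverse)

lemma vlim_subseq: "vlim X L \<Longrightarrow> strict_mono r \<Longrightarrow> vlim (X \<circ> r) L"
  unfolding vlim_def
proof (intro allI impI)
  fix e :: real assume x: "\<forall>e>0. \<exists>N. \<forall>n\<ge>N. nv (X n - L) < e" and r: "strict_mono r" and e: "e > 0"
  obtain N where N: "\<forall>n\<ge>N. nv (X n - L) < e" using x e by blast
  show "\<exists>N. \<forall>n\<ge>N. nv ((X \<circ> r) n - L) < e"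
  proof (intro exI allI impI)
    fix n assume "n \<ge> N"
    moreover have "n \<le> r n" using seq_suble[OF r] by simp
    ultimately show "nv ((X \<circ> r) n - L) < e" using N by simp
  qed
qed

lemma vlim_nv: "vlim X L \<Longrightarrow> \<forall>n. nv (X n) = c \<Longrightarrow> nv L = c"
proof (rule ccontr)
  assume x: "vlim X L" and c: "\<forall>n. nv (X n) = c" and ne: "nv L \<noteq> c"
  have pos: "\<bar>nv L - c\<bar> > 0" using ne by simp
  obtain N where "\<forall>n\<ge>N. nv (X n - L) < \<bar>nv L - c\<bar>" using x pos unfolding vlim_def by blast
  then have "nv (X N - L) < \<bar>nv L - c\<bar>" by auto
  moreover have "\<bar>nv (X N) - nv L\<bar> \<le> nv (X N - L)" by (rule nv_diff_le)
  ultimately show False using c by auto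
qed

end

lemma sf_0: "subfield F \<Longrightarrow> 0 \<in> F" by (simp add: subfield_def)
lemma sf_1: "subfield F \<Longrightarrow> 1 \<in> F" by (simp add: subfield_def)
lemma sf_add: "subfield F \<Longrightarrow> x \<in> F \<Longrightarrow> y \<in> F \<Longrightarrow> x + y \<in> F" by (simp add: subfield_def)
lemma sf_mult: "subfield F \<Longrightarrow> x \<in> F \<Longrightarrow> y \<in> F \<Longrightarrow> x * y \<in> F" by (simp add: subfield_def)
lemma sf_uminus: "subfield F \<Longrightarrow> x \<in> F \<Longrightarrow> - x \<in> F" by (simp add: subfield_def)
lemma sf_diff: "subfield F \<Longrightarrow> x \<in> F \<Longrightarrow> y \<in> F \<Longrightarrow> x - y \<in> F"
  using sf_add[of F x "- y"] sf_uminus[of F y] by simp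
lemma sf_inverse: "subfield F \<Longrightarrow> x \<in> F \<Longrightarrow> inverse x \<in> F"
  by (cases "x = 0") (auto simp: subfield_def)
lemma sf_divide: "subfield F \<Longrightarrow> x \<in> F \<Longrightarrow> y \<in> F \<Longrightarrow> x / y \<in> F"
  by (simp add: divide_inverse sf_mult sf_inverse)
lemma sf_power: "subfield F \<Longrightarrow> x \<in> F \<Longrightarrow> x ^ n \<in> F"
  by (induction n) (auto simp: sf_1 sf_mult)

section \<open>Compactness of the integers\<close>

lemma powi_le_self:
  fixes q :: real
  assumes q: "0 < q" "q < 1" and lt: "q powi n < 1"
  shows "q powi n \<le> q"
proof (cases "n \<ge> 1")
  case True
  then have "q powi n = q ^ nat n" by (simp add: power_int_def)
  also have "\<dots> \<le> q ^ 1" using True q by (intro power_decreasing) auto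
  finally show ?thesis by simp
next
  case False
  show ?thesis
  proof (cases "n = 0")
    case True then show ?thesis using lt by simp
  next
    case False
    with \<open>\<not> n \<ge> 1\<close> have "n < 0" by simp
    then have "q powi n = inverse q ^ nat (- n)" by (simp add: power_int_def)
    moreover have "inverse q \<ge> 1" using q by (intro one_le_inverse) auto
    ultimately have "q powi n \<ge> 1" by simp
    then show ?thesis using lt by simp
  qed
qed

lemma (in nav) nv_tri_diff: "nv (x - z) \<le> nv (x - y) + nv (y - z)"
  using nv_tri[of "x - y" "y - z"] by simp

locale lfield = nav +
  fixes F
  assumes LF: "local_subfield nv F" and VC: "v_complete nv"
begin

lemma SF: "subfield F" using LF unfolding local_subfield_def by auto

lemma unif_le:
  assumes u: "uniformizer nv F \<pi>" and x: "x \<in> F" and lt: "nv x < 1"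
  shows "nv x \<le> nv \<pi>"
proof (cases "x = 0")
  case True then show ?thesis using nv_ge0 by simp
next
  case False
  then obtain n :: int where n: "nv x = nv \<pi> powi n" using u x unfolding uniformizer_def by blast
  have q: "0 < nv \<pi>" "nv \<pi> < 1" using u unfolding uniformizer_def by auto
  show ?thesis using powi_le_self[OF q, of n] n lt by simp
qed

lemma integers_approx:
  assumes u: "uniformizer nv F \<pi>"
  shows "\<exists>K. finite K \<and> K \<subseteq> integers nv F \<and> (\<forall>x\<in>integers nv F. \<exists>r\<in>K. nv (x - r) \<le> nv \<pi> ^ k)"
proof (induction k)
  case 0
  have "0 \<in> integers nv F" using SF sf_0 unfolding integers_def by auto
  then show ?case by (intro exI[of _ "{0}"]) (auto simp: integers_def)
next
  case (Suc k)
  obtain K where K: "finite K" "K \<subseteq> integers nv F" "\<forall>x\<in>integers nv F. \<exists>r\<in>K. nv (x - r) \<le> nv \<pi> ^ k"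
    using Suc.IH by blast
  obtain R where R: "finite R" "R \<subseteq> integers nv F" "\<forall>x\<in>integers nv F. \<exists>r\<in>R. nv (x - r) < 1"
    using LF unfolding local_subfield_def by blast
  have piF: "\<pi> \<in> F" and q: "0 < nv \<pi>" "nv \<pi> < 1" using u unfolding uniformizer_def by auto
  have pi0: "\<pi> \<noteq> 0" using q by auto
  have pkF: "\<pi> ^ k \<in> F" using sf_power[OF SF piF] .
  have nvpk: "nv (\<pi> ^ k) = nv \<pi> ^ k" by (rule nv_power)
  have pkpos: "nv \<pi> ^ k > 0" using q by simp
  define K' where "K' = (\<lambda>(r, r'). r + \<pi> ^ k * r') ` (K \<times> R)"
  have "finite K'" unfolding K'_def using K R by auto
  moreover have "K' \<subseteq> integers nv F"
  proof
    fix z assume "z \<in> K'"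
    then obtain r r' where z: "z = r + \<pi> ^ k * r'" and rr: "r \<in> K" "r' \<in> R" unfolding K'_def by auto
    have rO: "r \<in> F" "nv r \<le> 1" using rr K(2) unfolding integers_def by auto
    have r'O: "r' \<in> F" "nv r' \<le> 1" using rr R(2) unfolding integers_def by auto
    have "z \<in> F" unfolding z using rO r'O pkF SF by (intro sf_add sf_mult) auto
    moreover have "nv (\<pi> ^ k * r') \<le> 1"
      using r'O q by (simp add: nv_mult nv_power mult_le_one power_le_one)
    then have "nv z \<le> 1" unfolding z using nv_max[of r "\<pi> ^ k * r'"] rO by linarith
    ultimately show "z \<in> integers nv F" unfolding integers_def by auto
  qed
  moreover have "\<forall>x\<in>integers nv F. \<exists>r\<in>K'. nv (x - r) \<le> nv \<pi> ^ Suc k"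
  proof
    fix x assume x: "x \<in> integers nv F"
    obtain r where r: "r \<in> K" "nv (x - r) \<le> nv \<pi> ^ k" using K(3) x by blast
    have rF: "r \<in> F" using r K(2) unfolding integers_def by auto
    have xF: "x \<in> F" using x unfolding integers_def by auto
    define z where "z = (x - r) / \<pi> ^ k"
    have zF: "z \<in> F" unfolding z_def using SF xF rF pkF by (intro sf_divide sf_diff) auto
    have "nv z = nv (x - r) / nv \<pi> ^ k" unfolding z_def by (simp add: nv_divide nv_power)
    also have "\<dots> \<le> 1" using r pkpos by simp
    finally have "z \<in> integers nv F" using zF unfolding integers_def by auto
    then obtain r' where r': "r' \<in> R" "nv (z - r') < 1" using R(3) by blast
    have r'F: "r' \<in> F" using r' R(2) unfolding integers_def by auto
    have zr: "nv (z - r') \<le> nv \<pi>" using unif_le[OF u sf_diff[OF SF zF r'F] r'(2)] .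
    have "x - (r + \<pi> ^ k * r') = \<pi> ^ k * (z - r')" unfolding z_def using pi0 by (simp add: field_simps)
    then have "nv (x - (r + \<pi> ^ k * r')) = nv \<pi> ^ k * nv (z - r')" by (simp add: nv_mult nv_power)
    also have "\<dots> \<le> nv \<pi> ^ k * nv \<pi>" using zr pkpos by (intro mult_left_mono) auto
    also have "\<dots> = nv \<pi> ^ Suc k" by simp
    finally have fin: "nv (x - (r + \<pi> ^ k * r')) \<le> nv \<pi> ^ Suc k" .
    have "(r, r') \<in> K \<times> R" using r(1) r'(1) by simp
    then have "(\<lambda>(r, r'). r + \<pi> ^ k * r') (r, r') \<in> K'" unfolding K'_def by (rule imageI)
    then have "r + \<pi> ^ k * r' \<in> K'" by simp
    then show "\<exists>r\<in>K'. nv (x - r) \<le> nv \<pi> ^ Suc k" using fin by blast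
  qed
  ultimately show ?case by blast
qed

lemma O_metric: "Metric_space (integers nv F) (\<lambda>x y. nv (x - y))"
proof
  show "\<And>x y. 0 \<le> nv (x - y)" by simp
  show "\<And>x y. nv (x - y) = nv (y - x)" by (rule nv_commute)
  show "\<And>x y. nv (x - y) = 0 \<longleftrightarrow> x = y" by simp
  show "\<And>x y z. nv (x - z) \<le> nv (x - y) + nv (y - z)"
    by (rule nv_tri_diff)
qed

lemma O_seqcompact:
  assumes X: "range (X :: nat \<Rightarrow> _) \<subseteq> integers nv F"
  shows "\<exists>r L. strict_mono r \<and> L \<in> integers nv F \<and> vlim (X \<circ> r) L"
proof -
  interpret MS: Metric_space "integers nv F" "\<lambda>x y. nv (x - y)" by (rule O_metric)
  obtain \<pi> where u: "uniformizer nv F \<pi>" using LF unfolding local_subfield_def by blast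
  have q: "0 < nv \<pi>" "nv \<pi> < 1" using u unfolding uniformizer_def by auto
  have tb: "MS.mtotally_bounded (integers nv F)"
    unfolding MS.mtotally_bounded_def
  proof (intro allI impI)
    fix e :: real assume e: "e > 0"
    obtain k where k: "nv \<pi> ^ k < e" using real_arch_pow_inv[OF e q(2)] by blast
    obtain K where K: "finite K" "K \<subseteq> integers nv F" "\<forall>x\<in>integers nv F. \<exists>r\<in>K. nv (x - r) \<le> nv \<pi> ^ k"
      using integers_approx[OF u] by blast
    have "integers nv F \<subseteq> (\<Union>x\<in>K. MS.mball x e)"
    proof
      fix x assume x: "x \<in> integers nv F"
      then obtain r where r: "r \<in> K" "nv (x - r) \<le> nv \<pi> ^ k" using K(3) by blast
      then have "x \<in> MS.mball r e" using x K(2) k nv_commute[of x r] by auto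
      then show "x \<in> (\<Union>x\<in>K. MS.mball x e)" using r by blast
    qed
    then show "\<exists>K. finite K \<and> K \<subseteq> integers nv F \<and> integers nv F \<subseteq> (\<Union>x\<in>K. MS.mball x e)"
      using K by blast
  qed
  note H = iffD1[OF MS.mtotally_bounded_sequentially tb]
  from H[THEN conjunct2, rule_format, OF X] obtain r where r: "strict_mono r" "MS.MCauchy (X \<circ> r)" by blast
  have cauchy: "\<forall>e>0. \<exists>N. \<forall>m\<ge>N. \<forall>n\<ge>N. nv ((X \<circ> r) m - (X \<circ> r) n) < e"
  proof (intro allI impI)
    fix e :: real assume e: "e > 0"
    have "\<forall>e>0. \<exists>N. \<forall>n n'. N \<le> n \<longrightarrow> N \<le> n' \<longrightarrow> nv ((X \<circ> r) n - (X \<circ> r) n') < e"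
      using r(2) unfolding MS.MCauchy_def by (rule conjunct2)
    then obtain N where N: "\<forall>n n'. N \<le> n \<longrightarrow> N \<le> n' \<longrightarrow> nv ((X \<circ> r) n - (X \<circ> r) n') < e"
      using e by blast
    show "\<exists>N. \<forall>m\<ge>N. \<forall>n\<ge>N. nv ((X \<circ> r) m - (X \<circ> r) n) < e"
    proof (intro exI allI impI)
      fix m n assume "N \<le> m" "N \<le> n"
      then show "nv ((X \<circ> r) m - (X \<circ> r) n) < e" using N by blast
    qed
  qed
  have vc: "\<And>Y :: nat \<Rightarrow> _. (\<forall>e>0. \<exists>N. \<forall>m\<ge>N. \<forall>n\<ge>N. nv (Y m - Y n) < e) \<Longrightarrow> \<exists>L. \<forall>e>0. \<exists>N. \<forall>n\<ge>N. nv (Y n - L) < e"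
    using VC unfolding v_complete_def by blast
  from vc[OF cauchy] obtain L where L: "\<forall>e>0. \<exists>N. \<forall>n\<ge>N. nv ((X \<circ> r) n - L) < e" by blast
  then have vl: "vlim (X \<circ> r) L" unfolding vlim_def by blast
  have "L \<in> v_closure nv F"
    unfolding v_closure_def
  proof (intro CollectI allI impI)
    fix e :: real assume "e > 0"
    then obtain N where "\<forall>n\<ge>N. nv ((X \<circ> r) n - L) < e" using L by blast
    then have "nv (L - (X \<circ> r) N) < e" using nv_commute by auto
    moreover have "(X \<circ> r) N \<in> F" using X unfolding integers_def by auto
    ultimately show "\<exists>a\<in>F. nv (L - a) < e" by blast
  qed
  then have LF': "L \<in> F" using LF unfolding local_subfield_def v_closed_def by auto
  have "nv L \<le> 1"
  proof -
    obtain N1 where N1: "\<forall>n\<ge>N1. nv ((X \<circ> r) n - L) < 1" using L by force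
    have "nv L \<le> max (nv (L - (X \<circ> r) N1)) (nv ((X \<circ> r) N1))"
      using nv_max[of "L - (X \<circ> r) N1" "(X \<circ> r) N1"] by simp
    moreover have "nv (L - (X \<circ> r) N1) < 1" using N1 nv_commute by auto
    moreover have "nv ((X \<circ> r) N1) \<le> 1" using X unfolding integers_def by auto
    ultimately show ?thesis by linarith
  qed
  then show ?thesis using r(1) vl LF' unfolding integers_def by blast
qed

end

section \<open>Sequences in P1\<close>

lemma inf_subseq: "infinite {n::nat. P n} \<Longrightarrow> \<exists>r::nat \<Rightarrow> nat. strict_mono r \<and> (\<forall>n. P (r n))"
  using infinite_enumerate[of "{n. P n}"] by auto

lemma p1_tendsto_Some: "p1_tendsto nv X (Some L) \<longleftrightarrow> (\<forall>e>0. \<exists>N. \<forall>n\<ge>N. \<exists>z. X n = Some z \<and> nv (z - L) < e)"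
  unfolding p1_tendsto_def by simp

lemma p1_tendsto_None: "p1_tendsto nv X None \<longleftrightarrow> (\<forall>R. \<exists>N. \<forall>n\<ge>N. X n = None \<or> (\<exists>z. X n = Some z \<and> nv z > R))"
  unfolding p1_tendsto_def by simp

lemma p1_tendsto_subseq:
  assumes "p1_tendsto nv X l" "strict_mono (r :: nat \<Rightarrow> nat)"
  shows "p1_tendsto nv (X \<circ> r) l"
proof (cases l)
  case None
  show ?thesis unfolding None p1_tendsto_None
  proof
    fix R
    obtain N where N: "\<forall>n\<ge>N. X n = None \<or> (\<exists>z. X n = Some z \<and> nv z > R)"
      using assms(1) unfolding None p1_tendsto_None by blast
    show "\<exists>N. \<forall>n\<ge>N. (X \<circ> r) n = None \<or> (\<exists>z. (X \<circ> r) n = Some z \<and> nv z > R)"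
    proof (intro exI allI impI)
      fix n assume "N \<le> n"
      moreover have "n \<le> r n" using seq_suble[OF assms(2)] by simp
      ultimately have "N \<le> r n" by linarith
      then show "(X \<circ> r) n = None \<or> (\<exists>z. (X \<circ> r) n = Some z \<and> nv z > R)" using N by simp
    qed
  qed
next
  case (Some L)
  show ?thesis unfolding Some p1_tendsto_Some
  proof (intro allI impI)
    fix e :: real assume e: "e > 0"
    obtain N where N: "\<forall>n\<ge>N. \<exists>z. X n = Some z \<and> nv (z - L) < e"
      using assms(1) e unfolding Some p1_tendsto_Some by blast
    show "\<exists>N. \<forall>n\<ge>N. \<exists>z. (X \<circ> r) n = Some z \<and> nv (z - L) < e"
    proof (rule exI[of _ N], intro allI impI)
      fix n assume "N \<le> n"
      moreover have "n \<le> r n" using seq_suble[OF assms(2)] by simp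
      ultimately have "N \<le> r n" by linarith
      then show "\<exists>z. (X \<circ> r) n = Some z \<and> nv (z - L) < e" using N by simp
    qed
  qed
qed

context nav
begin

lemma p1_of_vlim:
  assumes "\<forall>n. X n = Some (Y n)" "vlim Y L"
  shows "p1_tendsto nv X (Some L)"
  unfolding p1_tendsto_Some
proof (intro allI impI)
  fix e :: real assume "e > 0"
  then obtain N where N: "\<forall>n\<ge>N. nv (Y n - L) < e" using assms(2) unfolding vlim_def by blast
  show "\<exists>N. \<forall>n\<ge>N. \<exists>z. X n = Some z \<and> nv (z - L) < e"
  proof (rule exI[of _ N], intro allI impI)
    fix n assume "N \<le> n"
    then show "\<exists>z. X n = Some z \<and> nv (z - L) < e" using N assms(1) by simp
  qed
qed

end

context lfield
begin

lemma P1_seqcompact: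
  assumes z: "range (z :: nat \<Rightarrow> _) \<subseteq> P1 F"
  shows "\<exists>r l. strict_mono r \<and> p1_tendsto nv (z \<circ> r) l"
proof -
  have zF: "a \<in> F" if "z n = Some a" for n a
  proof -
    have "z n \<in> P1 F" using z by blast
    then show ?thesis using that unfolding P1_def by auto
  qed
  let ?A = "{n. z n = None}"
  let ?B = "{n. \<exists>a. z n = Some a \<and> nv a \<le> 1}"
  let ?C = "{n. \<exists>a. z n = Some a \<and> nv a > 1}"
  have "UNIV = ?A \<union> ?B \<union> ?C"
  proof (intro set_eqI iffI)
    fix n :: nat
    show "n \<in> ?A \<union> ?B \<union> ?C"
    proof (cases "z n")
      case None then show ?thesis by simp
    next
      case (Some a) then show ?thesis by (cases "nv a \<le> 1") auto
    qed
  qed simp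
  then have "infinite ?A \<or> infinite ?B \<or> infinite ?C"
  proof (rule contrapos_pp)
    assume "\<not> (infinite ?A \<or> infinite ?B \<or> infinite ?C)"
    then have fin: "finite (?A \<union> ?B \<union> ?C)" by simp
    show "UNIV \<noteq> ?A \<union> ?B \<union> ?C"
    proof
      assume eq: "UNIV = ?A \<union> ?B \<union> ?C"
      have "finite (UNIV :: nat set)" by (simp only: eq fin)
      then show False by simp
    qed
  qed
  moreover
  { assume "infinite ?A"
    then obtain r where r: "strict_mono (r :: nat \<Rightarrow> nat)" "\<forall>n. z (r n) = None" using inf_subseq[of "\<lambda>n. z n = None"] by auto
    have "p1_tendsto nv (z \<circ> r) None" unfolding p1_tendsto_None using r(2) by simp
    then have ?thesis using r(1) by blast }
  moreover
  { assume "infinite ?B"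
    then obtain r1 where r1: "strict_mono (r1 :: nat \<Rightarrow> nat)" "\<forall>n. \<exists>a. z (r1 n) = Some a \<and> nv a \<le> 1"
      using inf_subseq[of "\<lambda>n. \<exists>a. z n = Some a \<and> nv a \<le> 1"] by auto
    define a where "a n = the (z (r1 n))" for n
    have za: "\<forall>n. z (r1 n) = Some (a n)"
    proof
      fix n
      obtain a' where "z (r1 n) = Some a'" using r1(2) by blast
      then show "z (r1 n) = Some (a n)" unfolding a_def by simp
    qed
    have "range a \<subseteq> integers nv F"
      unfolding integers_def using r1(2) za zF by fastforce
    then obtain r2 L where r2: "strict_mono (r2 :: nat \<Rightarrow> nat)" "vlim (a \<circ> r2) L" using O_seqcompact by blast
    have "p1_tendsto nv (z \<circ> (r1 \<circ> r2)) (Some L)"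
      using p1_of_vlim[of "z \<circ> (r1 \<circ> r2)" "a \<circ> r2" L] za r2(2) by simp
    moreover have "strict_mono (r1 \<circ> r2)" using r1(1) r2(1) by (rule strict_mono_o)
    ultimately have ?thesis by blast }
  moreover
  { assume "infinite ?C"
    then obtain r1 where r1: "strict_mono (r1 :: nat \<Rightarrow> nat)" "\<forall>n. \<exists>a. z (r1 n) = Some a \<and> nv a > 1"
      using inf_subseq[of "\<lambda>n. \<exists>a. z n = Some a \<and> nv a > 1"] by auto
    define a where "a n = the (z (r1 n))" for n
    have za: "\<forall>n. z (r1 n) = Some (a n)"
    proof
      fix n
      obtain a' where "z (r1 n) = Some a'" using r1(2) by blast
      then show "z (r1 n) = Some (a n)" unfolding a_def by simp
    qed
    have a1: "\<forall>n. nv (a n) > 1" using r1(2) za by fastforce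
    have aF: "\<forall>n. a n \<in> F" using za zF by blast
    define b where "b n = inverse (a n)" for n
    have bnv: "nv (b n) = inverse (nv (a n))" for n unfolding b_def by (rule nv_inverse)
    have "range b \<subseteq> integers nv F"
    proof
      fix x assume "x \<in> range b"
      then obtain n where n: "x = b n" by blast
      have "b n \<in> F" unfolding b_def using aF SF sf_inverse by blast
      moreover have "nv (b n) \<le> 1" using bnv a1[rule_format, of n] by (simp add: inverse_le_1_iff)
      ultimately show "x \<in> integers nv F" unfolding integers_def n by simp
    qed
    then obtain r2 L where r2: "strict_mono (r2 :: nat \<Rightarrow> nat)" "vlim (b \<circ> r2) L" using O_seqcompact by blast
    have sm: "strict_mono (r1 \<circ> r2)" using r1(1) r2(1) by (rule strict_mono_o)
    have ?thesis
    proof (cases "L = 0")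
      case False
      have vl: "vlim (\<lambda>n. inverse ((b \<circ> r2) n)) (inverse L)" using vlim_inverse[OF r2(2) False] .
      have eqs: "\<forall>n. (z \<circ> (r1 \<circ> r2)) n = Some (inverse ((b \<circ> r2) n))"
        using za unfolding b_def by simp
      have "p1_tendsto nv (z \<circ> (r1 \<circ> r2)) (Some (inverse L))"
        by (rule p1_of_vlim[OF eqs vl])
      then show ?thesis using sm by blast
    next
      case True
      have "p1_tendsto nv (z \<circ> (r1 \<circ> r2)) None"
        unfolding p1_tendsto_None
      proof
        fix R :: real
        define R' where "R' = max R 1"
        have R': "R' > 0" "R' \<ge> R" unfolding R'_def by auto
        obtain N where N: "\<forall>n\<ge>N. nv ((b \<circ> r2) n - L) < inverse R'"
          using r2(2) R' unfolding vlim_def by force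
        show "\<exists>N. \<forall>n\<ge>N. (z \<circ> (r1 \<circ> r2)) n = None \<or> (\<exists>w. (z \<circ> (r1 \<circ> r2)) n = Some w \<and> nv w > R)"
        proof (rule exI[of _ N], intro allI impI disjI2)
          fix n assume "N \<le> n"
          then have "nv (b (r2 n)) < inverse R'" using N True by simp
          then have "inverse (nv (a (r2 n))) < inverse R'" using bnv by simp
          moreover have "0 < nv (a (r2 n))" using a1 by (meson less_trans zero_less_one)
          ultimately have "nv (a (r2 n)) > R'" by (rule inverse_less_imp_less)
          then show "\<exists>w. (z \<circ> (r1 \<circ> r2)) n = Some w \<and> nv w > R" using za R'(2) by force
        qed
      qed
      then show ?thesis using sm by blast
    qed }
  ultimately show ?thesis by blast
qed

end

lemma mob_smul: "l \<noteq> 0 \<Longrightarrow> mob (msmul l M) x = mob M x"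
proof -
  assume l: "l \<noteq> 0"
  obtain a b c d where M: "M = (a, b, c, d)" by (cases M) auto
  show ?thesis
  proof (cases x)
    case None
    then show ?thesis using l unfolding M by simp
  next
    case (Some z)
    have e: "l * c * z + l * d = l * (c * z + d)" by (simp add: algebra_simps)
    have f: "l * a * z + l * b = l * (a * z + b)" by (simp add: algebra_simps)
    show ?thesis using l unfolding M Some by (simp add: e f)
  qed
qed

lemma msmul_msmul: "msmul a (msmul b M) = msmul (a * b) M"
  by (cases M) (simp add: algebra_simps)

lemma msmul_1: "msmul 1 M = M"
  by (cases M) simp

lemma mapply_msmul: "mapply (msmul l M) x = vscale l (mapply M x)"
  by (cases M, cases x) (simp add: vscale_def algebra_simps)

lemma pgl2_elim:
  assumes "g \<in> pgl2 F"
  obtains N where "g = pgl_class F N" "gl2 F N"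
  using assms unfolding pgl2_def by blast

lemma pgl_class_mem: "M \<in> pgl_class F N \<longleftrightarrow> (\<exists>l. l \<in> F \<and> l \<noteq> 0 \<and> M = msmul l N)"
proof
  assume "M \<in> pgl_class F N"
  then obtain l where "M = msmul l N" "l \<in> F" "l \<noteq> 0" unfolding pgl_class_def by blast
  then show "\<exists>l. l \<in> F \<and> l \<noteq> 0 \<and> M = msmul l N" by blast
next
  assume "\<exists>l. l \<in> F \<and> l \<noteq> 0 \<and> M = msmul l N"
  then obtain l where "M = msmul l N" "l \<in> F" "l \<noteq> 0" by blast
  then show "M \<in> pgl_class F N" unfolding pgl_class_def
    by (intro CollectI exI[of _ l]) simp
qed

lemma pmob_class:
  assumes "subfield F" "gl2 F N"
  shows "pmob (pgl_class F N) x = mob N x"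
proof -
  have "N \<in> pgl_class F N" unfolding pgl_class_mem
    by (intro exI[of _ 1]) (simp add: sf_1[OF assms(1)] msmul_1)
  then have "(SOME M. M \<in> pgl_class F N) \<in> pgl_class F N" by (rule someI)
  then obtain l where "l \<noteq> 0" "(SOME M. M \<in> pgl_class F N) = msmul l N" unfolding pgl_class_mem by blast
  then show ?thesis unfolding pmob_def using mob_smul by simp
qed

lemma pmob_mem:
  assumes "subfield F" "g \<in> pgl2 F" "M \<in> g"
  shows "pmob g x = mob M x"
proof -
  obtain N where N: "g = pgl_class F N" "gl2 F N" using pgl2_elim[OF assms(2)] by blast
  obtain l where l: "l \<noteq> 0" "M = msmul l N" using assms(3) unfolding N pgl_class_mem by blast
  have "pmob g x = mob N x" using pmob_class[OF assms(1) N(2)] N(1) by simp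
  also have "\<dots> = mob M x" unfolding l(2) using mob_smul[OF l(1)] by simp
  finally show ?thesis .
qed

lemma mob_P1:
  assumes "subfield F" "gl2 F N" "x \<in> P1 F"
  shows "mob N x \<in> P1 F"
proof -
  obtain a b c d where M: "N = (a, b, c, d)" by (cases N) auto
  have F: "a \<in> F" "b \<in> F" "c \<in> F" "d \<in> F" using assms(2) unfolding gl2_def M by auto
  show ?thesis
  proof (cases x)
    case None
    then show ?thesis unfolding M P1_def using F sf_divide[OF assms(1)] by auto
  next
    case (Some z)
    then have z: "z \<in> F" using assms(3) unfolding P1_def by auto
    have "(a * z + b) / (c * z + d) \<in> F" using F z assms(1)
      by (intro sf_divide sf_add sf_mult) auto
    then show ?thesis unfolding M Some P1_def by auto
  qed
qed

lemma pmob_P1: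
  assumes "subfield F" "g \<in> pgl2 F" "x \<in> P1 F"
  shows "pmob g x \<in> P1 F"
proof -
  obtain N where N: "g = pgl_class F N" "gl2 F N" using pgl2_elim[OF assms(2)] by blast
  show ?thesis using pmob_class[OF assms(1) N(2)] mob_P1[OF assms(1) N(2) assms(3)] N(1) by simp
qed

section \<open>Limits of Moebius transformations\<close>

context nav
begin

lemma vlim_subseq': "vlim X L \<Longrightarrow> strict_mono (r :: nat \<Rightarrow> nat) \<Longrightarrow> vlim (\<lambda>n. X (r n)) L"
  using vlim_subseq[of X L r] by (simp add: o_def)

lemma mob_lim:
  assumes SF: "subfield F" and w: "w \<notin> F"
    and qF: "q1 \<in> F" "q2 \<in> F" "q3 \<in> F" "q4 \<in> F" and det: "q1 * q4 - q2 * q3 \<noteq> 0"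
    and v1: "vlim Q1 q1" and v2: "vlim Q2 q2" and v3: "vlim Q3 q3" and v4: "vlim Q4 q4"
  shows "\<exists>t. t \<notin> F \<and> p1_tendsto nv (\<lambda>j. mob (Q1 j, Q2 j, Q3 j, Q4 j) (Some w)) (Some t)"
proof -
  define D where "D = q3 * w + q4"
  define Nm where "Nm = q1 * w + q2"
  have D0: "D \<noteq> 0"
  proof
    assume D: "D = 0"
    show False
    proof (cases "q3 = 0")
      case True
      then have "q4 = 0" using D unfolding D_def by simp
      then show False using det True by simp
    next
      case False
      then have "w = - q4 / q3" using D unfolding D_def by (simp add: field_simps eq_neg_iff_add_eq_0)
      moreover have "- q4 / q3 \<in> F" using SF qF by (intro sf_divide sf_uminus) auto
      ultimately show False using w by simp
    qed
  qed
  have vden: "vlim (\<lambda>j. Q3 j * w + Q4 j) D" unfolding D_def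
    by (intro vlim_add vlim_mult vlim_const v3 v4)
  have vnum: "vlim (\<lambda>j. Q1 j * w + Q2 j) Nm" unfolding Nm_def
    by (intro vlim_add vlim_mult vlim_const v1 v2)
  obtain N0 where N0: "\<forall>j\<ge>N0. nv (Q3 j * w + Q4 j) = nv D" using vlim_eventually_nz[OF vden D0] by blast
  have vq: "vlim (\<lambda>j. (Q1 j * w + Q2 j) / (Q3 j * w + Q4 j)) (Nm / D)"
    using vlim_divide[OF vnum vden D0] .
  have tend: "p1_tendsto nv (\<lambda>j. mob (Q1 j, Q2 j, Q3 j, Q4 j) (Some w)) (Some (Nm / D))"
    unfolding p1_tendsto_Some
  proof (intro allI impI)
    fix e :: real assume "e > 0"
    then obtain N1 where N1: "\<forall>j\<ge>N1. nv ((Q1 j * w + Q2 j) / (Q3 j * w + Q4 j) - Nm / D) < e"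
      using vq unfolding vlim_def by blast
    show "\<exists>N. \<forall>n\<ge>N. \<exists>z. mob (Q1 n, Q2 n, Q3 n, Q4 n) (Some w) = Some z \<and> nv (z - Nm / D) < e"
    proof (rule exI[of _ "max N0 N1"], intro allI impI)
      fix n assume n: "max N0 N1 \<le> n"
      then have "nv (Q3 n * w + Q4 n) = nv D" using N0 by simp
      then have "Q3 n * w + Q4 n \<noteq> 0" using D0 by auto
      then have "mob (Q1 n, Q2 n, Q3 n, Q4 n) (Some w) = Some ((Q1 n * w + Q2 n) / (Q3 n * w + Q4 n))"
        by simp
      moreover have "nv ((Q1 n * w + Q2 n) / (Q3 n * w + Q4 n) - Nm / D) < e" using N1 n by simp
      ultimately show "\<exists>z. mob (Q1 n, Q2 n, Q3 n, Q4 n) (Some w) = Some z \<and> nv (z - Nm / D) < e"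
        by blast
    qed
  qed
  have "Nm / D \<notin> F"
  proof
    assume tF: "Nm / D \<in> F"
    define t where "t = Nm / D"
    have eq: "q1 * w + q2 = t * (q3 * w + q4)" unfolding t_def Nm_def using D0 unfolding D_def by simp
    then have eq2: "(q1 - t * q3) * w = t * q4 - q2" by (simp add: algebra_simps)
    show False
    proof (cases "q1 - t * q3 = 0")
      case False
      then have "w = (t * q4 - q2) / (q1 - t * q3)" using eq2 by (simp add: field_simps)
      moreover have "(t * q4 - q2) / (q1 - t * q3) \<in> F" using SF qF tF unfolding t_def[symmetric]
        by (intro sf_divide sf_diff sf_mult) auto
      ultimately show False using w by simp
    next
      case True
      then have a: "q1 = t * q3" by simp
      then have b: "q2 = t * q4" using eq2 True by simp
      have "q1 * q4 - q2 * q3 = 0" unfolding a b by (simp add: algebra_simps)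
      then show False using det by simp
    qed
  qed
  then show ?thesis using tend by blast
qed

end

section \<open>Lattices\<close>

lemma vscale_vscale: "vscale a (vscale b x) = vscale (a * b) x"
  by (simp add: vscale_def algebra_simps)

lemma vscale_1: "vscale 1 x = x"
  by (simp add: vscale_def)

lemma mapply_vadd: "mapply M (vadd x y) = vadd (mapply M x) (mapply M y)"
  by (cases M, cases x, cases y) (simp add: vadd_def algebra_simps)

lemma mapply_vscale: "mapply M (vscale a x) = vscale a (mapply M x)"
  by (cases M, cases x) (simp add: vscale_def algebra_simps)

lemma vscale_vadd: "vscale l (vadd x y) = vadd (vscale l x) (vscale l y)"
  by (simp add: vscale_def vadd_def algebra_simps)

lemma vcomb: "vadd (vscale x (vadd (vscale a u) (vscale c w))) (vscale y (vadd (vscale b u) (vscale d w)))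
   = vadd (vscale (x * a + y * b) u) (vscale (x * c + y * d) w)"
  by (simp add: vscale_def vadd_def algebra_simps)

lemma vid1: "u = vadd (vscale 1 u) (vscale 0 w)"
  by (simp add: vscale_def vadd_def)

lemma vid2: "w = vadd (vscale 0 u) (vscale 1 w)"
  by (simp add: vscale_def vadd_def)

lemma lat_span_img: "lat_span nv F u w = (\<lambda>p. vadd (vscale (fst p) u) (vscale (snd p) w)) ` (integers nv F \<times> integers nv F)"
proof (intro set_eqI iffI)
  fix x assume "x \<in> lat_span nv F u w"
  then obtain a b where ab: "x = vadd (vscale a u) (vscale b w)" "a \<in> integers nv F" "b \<in> integers nv F"
    unfolding lat_span_def by blast
  show "x \<in> (\<lambda>p. vadd (vscale (fst p) u) (vscale (snd p) w)) ` (integers nv F \<times> integers nv F)"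
    using ab by (intro image_eqI[of _ _ "(a, b)"]) auto
next
  fix x assume "x \<in> (\<lambda>p. vadd (vscale (fst p) u) (vscale (snd p) w)) ` (integers nv F \<times> integers nv F)"
  then obtain p where p: "x = vadd (vscale (fst p) u) (vscale (snd p) w)" "p \<in> integers nv F \<times> integers nv F" by blast
  show "x \<in> lat_span nv F u w" unfolding lat_span_def
    using p by (intro CollectI exI[of _ "fst p"] exI[of _ "snd p"]) auto
qed

lemma in_span: "x \<in> lat_span nv F u w \<longleftrightarrow> (\<exists>a b. a \<in> integers nv F \<and> b \<in> integers nv F \<and> x = vadd (vscale a u) (vscale b w))"
  unfolding lat_span_img by force

lemma image_mapply_span: "mapply M ` lat_span nv F u w = lat_span nv F (mapply M u) (mapply M w)"
  unfolding lat_span_img image_image by (simp add: mapply_vadd mapply_vscale)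

lemma image_vscale_span: "vscale l ` lat_span nv F u w = lat_span nv F (vscale l u) (vscale l w)"
  unfolding lat_span_img image_image by (simp add: vscale_vadd vscale_vscale mult.commute)

definition dt :: "'c::field \<times> 'c \<Rightarrow> 'c \<times> 'c \<Rightarrow> 'c" where
  "dt u w = fst u * snd w - snd u * fst w"

lemma indep:
  assumes "dt u w \<noteq> 0" "vadd (vscale x u) (vscale y w) = vadd (vscale x' u) (vscale y' w)"
  shows "x = x' \<and> y = y'"
proof -
  obtain p q where u: "u = (p, q)" by (cases u) auto
  obtain r s where w: "w = (r, s)" by (cases w) auto
  have e1: "x * p + y * r = x' * p + y' * r" and e2: "x * q + y * s = x' * q + y' * s"
    using assms(2) unfolding u w vadd_def vscale_def by auto
  have D: "p * s - q * r \<noteq> 0" using assms(1) unfolding dt_def u w by simp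
  have "(x - x') * (p * s - q * r) = s * ((x * p + y * r) - (x' * p + y' * r)) - r * ((x * q + y * s) - (x' * q + y' * s))"
    by (simp add: algebra_simps)
  also have "\<dots> = 0" using e1 e2 by simp
  finally have 1: "x = x'" using D by simp
  have "(y - y') * (p * s - q * r) = p * ((x * q + y * s) - (x' * q + y' * s)) - q * ((x * p + y * r) - (x' * p + y' * r))"
    by (simp add: algebra_simps)
  also have "\<dots> = 0" using e1 e2 by simp
  finally have 2: "y = y'" using D by simp
  show ?thesis using 1 2 by simp
qed

context nav
begin

lemma int_0: "subfield F \<Longrightarrow> 0 \<in> integers nv F" unfolding integers_def by (simp add: sf_0)
lemma int_1: "subfield F \<Longrightarrow> 1 \<in> integers nv F" unfolding integers_def by (simp add: sf_1)
lemma int_mult: "subfield F \<Longrightarrow> x \<in> integers nv F \<Longrightarrow> y \<in> integers nv F \<Longrightarrow> x * y \<in> integers nv F"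
  unfolding integers_def by (auto simp: sf_mult nv_mult mult_le_one)
lemma int_add: "subfield F \<Longrightarrow> x \<in> integers nv F \<Longrightarrow> y \<in> integers nv F \<Longrightarrow> x + y \<in> integers nv F"
  unfolding integers_def using nv_max[of x y] by (auto simp: sf_add)
lemma int_diff: "subfield F \<Longrightarrow> x \<in> integers nv F \<Longrightarrow> y \<in> integers nv F \<Longrightarrow> x - y \<in> integers nv F"
  unfolding integers_def using nv_max[of x "- y"] by (auto simp: sf_diff)

lemma span_transition:
  assumes SF: "subfield F" and d': "dt u' w' \<noteq> 0" and eq: "lat_span nv F u w = lat_span nv F u' w'"
  shows "\<exists>a b c d. a \<in> integers nv F \<and> b \<in> integers nv F \<and> c \<in> integers nv F \<and> d \<in> integers nv F \<and>
     u = vadd (vscale a u') (vscale c w') \<and> w = vadd (vscale b u') (vscale d w') \<and> nv (a * d - b * c) = 1"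
proof -
  have O01: "0 \<in> integers nv F" "1 \<in> integers nv F" using int_0[OF SF] int_1[OF SF] by auto
  have "u \<in> lat_span nv F u w" unfolding in_span using O01 vid1[of u w] by blast
  then have "u \<in> lat_span nv F u' w'" using eq by simp
  then obtain a c where ac: "a \<in> integers nv F" "c \<in> integers nv F" "u = vadd (vscale a u') (vscale c w')"
    unfolding in_span by blast
  have "w \<in> lat_span nv F u w" unfolding in_span using O01 vid2[of w u] by blast
  then have "w \<in> lat_span nv F u' w'" using eq by simp
  then obtain b d where bd: "b \<in> integers nv F" "d \<in> integers nv F" "w = vadd (vscale b u') (vscale d w')"
    unfolding in_span by blast
  have "u' \<in> lat_span nv F u' w'" unfolding in_span using O01 vid1[of u' w'] by blast
  then have "u' \<in> lat_span nv F u w" using eq by simp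
  then obtain a' c' where ac': "a' \<in> integers nv F" "c' \<in> integers nv F" "u' = vadd (vscale a' u) (vscale c' w)"
    unfolding in_span by blast
  have "w' \<in> lat_span nv F u' w'" unfolding in_span using O01 vid2[of w' u'] by blast
  then have "w' \<in> lat_span nv F u w" using eq by simp
  then obtain b' d' where bd': "b' \<in> integers nv F" "d' \<in> integers nv F" "w' = vadd (vscale b' u) (vscale d' w)"
    unfolding in_span by blast
  have "vadd (vscale 1 u') (vscale 0 w') = vadd (vscale (a' * a + c' * b) u') (vscale (a' * c + c' * d) w')"
    using ac'(3) unfolding ac(3) bd(3) vcomb using vid1[of u' w'] by simp
  from indep[OF d' this] have r1: "a' * a + c' * b = 1" "a' * c + c' * d = 0" by auto
  have "vadd (vscale 0 u') (vscale 1 w') = vadd (vscale (b' * a + d' * b) u') (vscale (b' * c + d' * d) w')"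
    using bd'(3) unfolding ac(3) bd(3) vcomb using vid2[of w' u'] by simp
  from indep[OF d' this] have r2: "b' * a + d' * b = 0" "b' * c + d' * d = 1" by auto
  have "(a' * d' - c' * b') * (a * d - c * b) = (a' * a + c' * b) * (b' * c + d' * d) - (a' * c + c' * d) * (b' * a + d' * b)"
    by (simp add: algebra_simps)
  also have "\<dots> = 1" using r1 r2 by simp
  finally have prod: "(a' * d' - c' * b') * (a * d - c * b) = 1" .
  have xO: "a * d - c * b \<in> integers nv F" using ac bd SF by (intro int_diff int_mult) auto
  have yO: "a' * d' - c' * b' \<in> integers nv F" using ac' bd' SF by (intro int_diff int_mult) auto
  have nx: "nv (a * d - c * b) \<le> 1" and ny: "nv (a' * d' - c' * b') \<le> 1" using xO yO unfolding integers_def by auto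
  have pr: "nv (a' * d' - c' * b') * nv (a * d - c * b) = 1" using prod nv_mult by (metis nv1)
  have "nv (a * d - c * b) = 1"
  proof (rule ccontr)
    assume "nv (a * d - c * b) \<noteq> 1"
    then have "nv (a * d - c * b) < 1" using nx by simp
    moreover have "nv (a' * d' - c' * b') * nv (a * d - c * b) \<le> nv (a * d - c * b)"
      using ny by (intro mult_left_le_one_le) auto
    ultimately show False using pr by linarith
  qed
  then have "nv (a * d - b * c) = 1" by (simp add: mult.commute)
  then show ?thesis using ac bd by blast
qed

end

lemma hclass_self: "1 \<in> F \<Longrightarrow> L \<in> hclass F L"
  unfolding hclass_def by (intro CollectI exI[of _ 1]) (simp add: vscale_1)

lemma pact_to_M:
  assumes SF: "subfield F" and g: "g \<in> pgl2 F" and eq: "pact g (hclass F L) = hclass F L'"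
  shows "\<exists>M\<in>g. mapply M ` L = L'"
proof -
  obtain N where N: "g = pgl_class F N" "gl2 F N" using pgl2_elim[OF g] by blast
  have Ng: "N \<in> g" unfolding N pgl_class_mem
    by (intro exI[of _ 1]) (simp add: sf_1[OF SF] msmul_1)
  have "mapply N ` L \<in> pact g (hclass F L)" unfolding pact_def
    using Ng hclass_self[OF sf_1[OF SF], of L] by (intro CollectI exI[of _ N] exI[of _ L]) simp
  then have "mapply N ` L \<in> hclass F L'" using eq by simp
  then obtain l where l: "l \<in> F" "l \<noteq> 0" "mapply N ` L = vscale l ` L'" unfolding hclass_def by blast
  define M where "M = msmul (inverse l) N"
  have Mg: "M \<in> g" unfolding N pgl_class_mem M_def using l SF sf_inverse
    by (intro exI[of _ "inverse l"]) auto
  have "mapply M ` L = vscale (inverse l) ` (mapply N ` L)"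
    unfolding M_def image_image mapply_msmul by simp
  also have "\<dots> = vscale (inverse l) ` vscale l ` L'" using l(3) by simp
  also have "\<dots> = L'" unfolding image_image vscale_vscale using l(2) by (simp add: vscale_1)
  finally show ?thesis using Mg by blast
qed

definition recon :: "'c::field \<times> 'c \<Rightarrow> 'c \<times> 'c \<Rightarrow> 'c \<times> 'c \<Rightarrow> 'c \<times> 'c \<Rightarrow> 'c mat2" where
  "recon u1 u2 W1 W2 = (fst W1 * snd u2 - fst W2 * snd u1, fst W2 * fst u1 - fst W1 * fst u2,
                        snd W1 * snd u2 - snd W2 * snd u1, snd W2 * fst u1 - snd W1 * fst u2)"

lemma recon_eq: "msmul (dt u1 u2) M = recon u1 u2 (mapply M u1) (mapply M u2)"
proof -
  obtain m1 m2 m3 m4 where M: "M = (m1, m2, m3, m4)" by (cases M) auto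
  obtain p11 p21 where u1: "u1 = (p11, p21)" by (cases u1) auto
  obtain p12 p22 where u2: "u2 = (p12, p22)" by (cases u2) auto
  show ?thesis unfolding M u1 u2 by (simp add: recon_def dt_def algebra_simps)
qed

lemma det_recon: "mdet (recon u1 u2 W1 W2) = dt W1 W2 * dt u1 u2"
proof -
  obtain p11 p21 where u1: "u1 = (p11, p21)" by (cases u1) auto
  obtain p12 p22 where u2: "u2 = (p12, p22)" by (cases u2) auto
  obtain x1 x2 where W1: "W1 = (x1, x2)" by (cases W1) auto
  obtain y1 y2 where W2: "W2 = (y1, y2)" by (cases W2) auto
  show ?thesis unfolding u1 u2 W1 W2 by (simp add: recon_def dt_def algebra_simps)
qed

lemma dt_comb: "dt (vadd (vscale a u) (vscale c w)) (vadd (vscale b u) (vscale d w)) = dt u w * (a * d - b * c)"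
  by (simp add: dt_def vadd_def vscale_def algebra_simps)

lemma mdet_tuple: "mdet Q = fst Q * snd (snd (snd Q)) - fst (snd Q) * fst (snd (snd Q))"
  by (cases Q) simp

context lfield
begin

lemma key_seq:
  assumes w: "w \<notin> F" and u: "u1 \<in> F \<times> F" "u2 \<in> F \<times> F" "u1' \<in> F \<times> F" "u2' \<in> F \<times> F"
    and d: "dt u1 u2 \<noteq> 0" "dt u1' u2' \<noteq> 0"
    and g: "\<forall>j. g j \<in> pgl2 F"
    and act: "\<forall>j. pact (g j) (hclass F (lat_span nv F u1 u2)) = hclass F (lat_span nv F u1' u2')"
  shows "\<exists>r t. strict_mono (r :: nat \<Rightarrow> nat) \<and> p1_tendsto nv (\<lambda>j. pmob (g (r j)) (Some w)) (Some t) \<and> t \<notin> F"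
proof -
  let ?O = "integers nv F"
  have ex: "\<forall>j. \<exists>M a b c d. M \<in> g j \<and> a \<in> ?O \<and> b \<in> ?O \<and> c \<in> ?O \<and> d \<in> ?O \<and>
      mapply M u1 = vadd (vscale a u1') (vscale c u2') \<and> mapply M u2 = vadd (vscale b u1') (vscale d u2') \<and>
      nv (a * d - b * c) = 1"
  proof
    fix j
    obtain M where M: "M \<in> g j" "mapply M ` lat_span nv F u1 u2 = lat_span nv F u1' u2'"
      using pact_to_M[OF SF g[rule_format, of j] act[rule_format, of j]] by blast
    then have "lat_span nv F (mapply M u1) (mapply M u2) = lat_span nv F u1' u2'" by (simp add: image_mapply_span)
    from span_transition[OF SF d(2) this] obtain a b c d where
      abcd: "a \<in> ?O" "b \<in> ?O" "c \<in> ?O" "d \<in> ?O"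
        "mapply M u1 = vadd (vscale a u1') (vscale c u2')" "mapply M u2 = vadd (vscale b u1') (vscale d u2')"
        "nv (a * d - b * c) = 1" by blast
    show "\<exists>M a b c d. M \<in> g j \<and> a \<in> ?O \<and> b \<in> ?O \<and> c \<in> ?O \<and> d \<in> ?O \<and>
      mapply M u1 = vadd (vscale a u1') (vscale c u2') \<and> mapply M u2 = vadd (vscale b u1') (vscale d u2') \<and>
      nv (a * d - b * c) = 1"
      using M(1) abcd by blast
  qed
  then obtain Mf A B C D where H: "\<And>j. Mf j \<in> g j \<and> A j \<in> ?O \<and> B j \<in> ?O \<and> C j \<in> ?O \<and> D j \<in> ?O \<and>
      mapply (Mf j) u1 = vadd (vscale (A j) u1') (vscale (C j) u2') \<and> mapply (Mf j) u2 = vadd (vscale (B j) u1') (vscale (D j) u2') \<and>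
      nv (A j * D j - B j * C j) = 1"
    by metis
  have AO: "range A \<subseteq> ?O" using H by blast
  obtain r1 a where r1: "strict_mono (r1 :: nat \<Rightarrow> nat)" "a \<in> ?O" "vlim (A \<circ> r1) a"
    using O_seqcompact[OF AO] by blast
  have BO: "range (B \<circ> r1) \<subseteq> ?O" using H by auto
  obtain r2 b where r2: "strict_mono (r2 :: nat \<Rightarrow> nat)" "b \<in> ?O" "vlim ((B \<circ> r1) \<circ> r2) b"
    using O_seqcompact[OF BO] by blast
  have CO: "range (C \<circ> r1 \<circ> r2) \<subseteq> ?O" using H by auto
  obtain r3 c where r3: "strict_mono (r3 :: nat \<Rightarrow> nat)" "c \<in> ?O" "vlim ((C \<circ> r1 \<circ> r2) \<circ> r3) c"
    using O_seqcompact[OF CO] by blast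
  have DO: "range (D \<circ> r1 \<circ> r2 \<circ> r3) \<subseteq> ?O" using H by auto
  obtain r4 d where r4: "strict_mono (r4 :: nat \<Rightarrow> nat)" "d \<in> ?O" "vlim ((D \<circ> r1 \<circ> r2 \<circ> r3) \<circ> r4) d"
    using O_seqcompact[OF DO] by blast
  define r where "r j = r1 (r2 (r3 (r4 j)))" for j
  have r_eq: "r = r1 \<circ> (r2 \<circ> (r3 \<circ> r4))" unfolding r_def by (simp add: fun_eq_iff)
  have smr: "strict_mono r" unfolding r_eq using r1(1) r2(1) r3(1) r4(1) by (intro strict_mono_o)
  have sm234: "strict_mono (r2 \<circ> (r3 \<circ> r4))" using r2(1) r3(1) r4(1) by (intro strict_mono_o)
  have sm34: "strict_mono (r3 \<circ> r4)" using r3(1) r4(1) by (intro strict_mono_o)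
  have vA: "vlim (\<lambda>j. A (r j)) a" using vlim_subseq'[OF r1(3) sm234] unfolding r_def by simp
  have vB: "vlim (\<lambda>j. B (r j)) b" using vlim_subseq'[OF r2(3) sm34] unfolding r_def by simp
  have vC: "vlim (\<lambda>j. C (r j)) c" using vlim_subseq'[OF r3(3) r4(1)] unfolding r_def by simp
  have vD: "vlim (\<lambda>j. D (r j)) d" using r4(3) unfolding r_def by (simp add: o_def)
  have abcdF: "a \<in> F" "b \<in> F" "c \<in> F" "d \<in> F" using r1(2) r2(2) r3(2) r4(2) unfolding integers_def by auto
  have "vlim (\<lambda>j. A (r j) * D (r j) - B (r j) * C (r j)) (a * d - b * c)"
    by (intro vlim_diff vlim_mult vA vB vC vD)
  moreover have "\<forall>j. nv (A (r j) * D (r j) - B (r j) * C (r j)) = 1" using H by blast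
  ultimately have ndet: "nv (a * d - b * c) = 1" by (rule vlim_nv)
  then have det0: "a * d - b * c \<noteq> 0" by auto
  obtain p11 p21 where u1: "u1 = (p11, p21)" by (cases u1) auto
  obtain p12 p22 where u2: "u2 = (p12, p22)" by (cases u2) auto
  obtain s1 s2 where u1': "u1' = (s1, s2)" by (cases u1') auto
  obtain t1 t2 where u2': "u2' = (t1, t2)" by (cases u2') auto
  have pF: "p11 \<in> F" "p21 \<in> F" "p12 \<in> F" "p22 \<in> F" "s1 \<in> F" "s2 \<in> F" "t1 \<in> F" "t2 \<in> F"
    using u unfolding u1 u2 u1' u2' by auto
  define Qs where "Qs j = recon u1 u2 (vadd (vscale (A (r j)) u1') (vscale (C (r j)) u2'))
      (vadd (vscale (B (r j)) u1') (vscale (D (r j)) u2'))" for j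
  define Q where "Q = recon u1 u2 (vadd (vscale a u1') (vscale c u2')) (vadd (vscale b u1') (vscale d u2'))"
  have pm: "pmob (g (r j)) (Some w) = mob (Qs j) (Some w)" for j
  proof -
    have "pmob (g (r j)) (Some w) = mob (Mf (r j)) (Some w)" using pmob_mem[OF SF g[rule_format] ] H by blast
    also have "\<dots> = mob (msmul (dt u1 u2) (Mf (r j))) (Some w)" using mob_smul[OF d(1)] by simp
    also have "\<dots> = mob (Qs j) (Some w)" unfolding recon_eq Qs_def using H by simp
    finally show ?thesis .
  qed
  define Q1 where "Q1 j = fst (Qs j)" for j
  define Q2 where "Q2 j = fst (snd (Qs j))" for j
  define Q3 where "Q3 j = fst (snd (snd (Qs j)))" for j
  define Q4 where "Q4 j = snd (snd (snd (Qs j)))" for j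
  have Qs_eq: "Qs j = (Q1 j, Q2 j, Q3 j, Q4 j)" for j unfolding Q1_def Q2_def Q3_def Q4_def by simp
  have v1: "vlim Q1 (fst Q)" unfolding Q1_def Qs_def Q_def
    by (simp only: recon_def u1 u2 u1' u2' vadd_def vscale_def fst_conv snd_conv)
      (intro vlim_diff vlim_add vlim_mult vlim_const vA vB vC vD)
  have v2: "vlim Q2 (fst (snd Q))" unfolding Q2_def Qs_def Q_def
    by (simp only: recon_def u1 u2 u1' u2' vadd_def vscale_def fst_conv snd_conv)
      (intro vlim_diff vlim_add vlim_mult vlim_const vA vB vC vD)
  have v3: "vlim Q3 (fst (snd (snd Q)))" unfolding Q3_def Qs_def Q_def
    by (simp only: recon_def u1 u2 u1' u2' vadd_def vscale_def fst_conv snd_conv)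
      (intro vlim_diff vlim_add vlim_mult vlim_const vA vB vC vD)
  have v4: "vlim Q4 (snd (snd (snd Q)))" unfolding Q4_def Qs_def Q_def
    by (simp only: recon_def u1 u2 u1' u2' vadd_def vscale_def fst_conv snd_conv)
      (intro vlim_diff vlim_add vlim_mult vlim_const vA vB vC vD)
  have qF: "fst Q \<in> F" "fst (snd Q) \<in> F" "fst (snd (snd Q)) \<in> F" "snd (snd (snd Q)) \<in> F"
    unfolding Q_def by (simp_all only: recon_def u1 u2 u1' u2' vadd_def vscale_def fst_conv snd_conv)
      (intro sf_diff sf_add sf_mult SF abcdF pF)+
  have "mdet Q = dt u1' u2' * (a * d - b * c) * dt u1 u2" unfolding Q_def det_recon dt_comb ..
  then have "mdet Q \<noteq> 0" using d det0 by simp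
  then have qdet: "fst Q * snd (snd (snd Q)) - fst (snd Q) * fst (snd (snd Q)) \<noteq> 0"
    unfolding mdet_tuple .
  obtain t where t: "t \<notin> F" "p1_tendsto nv (\<lambda>j. mob (Q1 j, Q2 j, Q3 j, Q4 j) (Some w)) (Some t)"
    using mob_lim[OF SF w qF qdet v1 v2 v3 v4] by blast
  have "(\<lambda>j. pmob (g (r j)) (Some w)) = (\<lambda>j. mob (Q1 j, Q2 j, Q3 j, Q4 j) (Some w))"
    using pm Qs_eq by simp
  then show ?thesis using t smr by metis
qed

end

lemma pvec_F: "subfield F \<Longrightarrow> a \<in> P1 F \<Longrightarrow> pvec a \<in> F \<times> F"
  unfolding P1_def by (auto simp: sf_0 sf_1)

lemma vscale_F: "subfield F \<Longrightarrow> l \<in> F \<Longrightarrow> x \<in> F \<times> F \<Longrightarrow> vscale l x \<in> F \<times> F"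
  unfolding vscale_def by (auto simp: sf_mult)

lemma dt_pvec:
  assumes "a \<noteq> b" "\<alpha> \<noteq> 0" "\<beta> \<noteq> 0"
  shows "dt (vscale \<alpha> (pvec a)) (vscale \<beta> (pvec b)) \<noteq> 0"
proof (cases a)
  case None
  then obtain z where b: "b = Some z" using assms(1) by (cases b) auto
  show ?thesis unfolding None b using assms by (simp add: dt_def vscale_def)
next
  case (Some z)
  show ?thesis
  proof (cases b)
    case None
    show ?thesis unfolding None Some using assms by (simp add: dt_def vscale_def)
  next
    case (Some z')
    then have "z \<noteq> z'" using assms(1) \<open>a = Some z\<close> by simp
    have "dt (vscale \<alpha> (pvec a)) (vscale \<beta> (pvec b)) = \<alpha> * \<beta> * (z - z')"
      unfolding Some \<open>a = Some z\<close> by (simp add: dt_def vscale_def algebra_simps)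
    then show ?thesis using assms \<open>z \<noteq> z'\<close> by simp
  qed
qed

lemma on_geod_lattice:
  assumes SF: "subfield F" and ab: "a \<in> P1 F" "b \<in> P1 F" "a \<noteq> b" and og: "on_geod nv F a b v"
  shows "\<exists>u1 u2. u1 \<in> F \<times> F \<and> u2 \<in> F \<times> F \<and> dt u1 u2 \<noteq> 0 \<and> v = hclass F (lat_span nv F u1 u2)"
proof -
  obtain \<alpha> \<beta> where ab': "\<alpha> \<in> F" "\<alpha> \<noteq> 0" "\<beta> \<in> F" "\<beta> \<noteq> 0"
    "v = hclass F (lat_span nv F (vscale \<alpha> (pvec a)) (vscale \<beta> (pvec b)))"
    using og unfolding on_geod_def by blast
  show ?thesis
    apply (rule exI[of _ "vscale \<alpha> (pvec a)"], rule exI[of _ "vscale \<beta> (pvec b)"])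
    using ab'(5) vscale_F[OF SF ab'(1) pvec_F[OF SF ab(1)]] vscale_F[OF SF ab'(3) pvec_F[OF SF ab(2)]]
      dt_pvec[OF ab(3) ab'(2) ab'(4)] by simp
qed

lemma vert_lattice:
  assumes SF: "subfield F" and Ls: "Ls \<subseteq> P1 F" and v: "v \<in> tree_verts nv F Ls"
  shows "\<exists>u1 u2. u1 \<in> F \<times> F \<and> u2 \<in> F \<times> F \<and> dt u1 u2 \<noteq> 0 \<and> v = hclass F (lat_span nv F u1 u2)"
proof -
  obtain a b where ab: "a \<in> Ls" "b \<in> Ls" "a \<noteq> b" "on_geod nv F a b v" using v unfolding tree_verts_def by blast
  have "a \<in> P1 F" "b \<in> P1 F" using ab Ls by auto
  then show ?thesis using on_geod_lattice[OF SF _ _ ab(3) ab(4)] by simp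
qed

lemma edge_verts:
  assumes "tree_edge nv F Ls v v'"
  shows "v \<in> tree_verts nv F Ls" "v' \<in> tree_verts nv F Ls"
  using assms unfolding tree_edge_def tree_verts_def by blast+

context lfield
begin

lemma exists_notin:
  assumes AC: "\<forall>f::'a poly. degree f > 0 \<longrightarrow> (\<exists>z. poly f z = 0)"
  shows "\<exists>w. w \<notin> F"
proof (rule ccontr)
  assume "\<not> (\<exists>w. w \<notin> F)"
  then have all: "\<And>w. w \<in> F" by blast
  obtain \<pi> where u: "uniformizer nv F \<pi>" using LF unfolding local_subfield_def by blast
  have q: "0 < nv \<pi>" "nv \<pi> < 1" using u unfolding uniformizer_def by auto
  have "degree [:- \<pi>, 0, 1:] > 0" by simp
  then obtain w where "poly [:- \<pi>, 0, 1:] w = 0" using AC by blast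
  then have w2: "w * w = \<pi>" by (simp add: algebra_simps)
  have nw: "nv w * nv w = nv \<pi>" using w2 nv_mult by metis
  have "nv w < 1"
  proof (rule ccontr)
    assume "\<not> nv w < 1"
    then have "1 \<le> nv w" by simp
    then have "1 * 1 \<le> nv w * nv w" by (intro mult_mono) auto
    then show False using nw q by simp
  qed
  then have le: "nv w \<le> nv \<pi>" using unif_le[OF u all] by blast
  have "nv \<pi> = nv w * nv w" using nw by simp
  also have "\<dots> \<le> nv \<pi> * nv \<pi>" using le by (intro mult_mono) auto
  also have "\<dots> < nv \<pi> * 1" using q by (intro mult_strict_left_mono) auto
  finally show False by simp
qed

lemma coord_lemma:
  assumes w: "w \<notin> F" and Ls: "Ls \<subseteq> P1 F"
    and sig: "(\<exists>v. v \<in> tree_verts nv F Ls \<and> sg = {v}) \<or> (\<exists>v v'. tree_edge nv F Ls v v' \<and> sg = {v, v'})"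
    and del: "\<forall>j. \<delta> j \<in> pgl2 F" and st: "\<forall>j. pact (\<delta> j) ` sg = sg"
  shows "\<exists>r t. strict_mono (r :: nat \<Rightarrow> nat) \<and> p1_tendsto nv (\<lambda>j. pmob (\<delta> (r j)) (Some w)) (Some t) \<and> t \<notin> F"
  using sig
proof
  assume "\<exists>v. v \<in> tree_verts nv F Ls \<and> sg = {v}"
  then obtain v where v: "v \<in> tree_verts nv F Ls" "sg = {v}" by blast
  obtain u1 u2 where u: "u1 \<in> F \<times> F" "u2 \<in> F \<times> F" "dt u1 u2 \<noteq> 0" "v = hclass F (lat_span nv F u1 u2)"
    using vert_lattice[OF SF Ls v(1)] by blast
  have "\<forall>j. pact (\<delta> j) v = v" using st unfolding v(2) by simp
  then have "\<forall>j. pact (\<delta> j) (hclass F (lat_span nv F u1 u2)) = hclass F (lat_span nv F u1 u2)"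
    using u(4) by simp
  then show ?thesis using key_seq[OF w u(1,2) u(1,2) u(3) u(3) del] by blast
next
  assume "\<exists>v v'. tree_edge nv F Ls v v' \<and> sg = {v, v'}"
  then obtain v v' where e: "tree_edge nv F Ls v v'" "sg = {v, v'}" by blast
  obtain u1 u2 where u: "u1 \<in> F \<times> F" "u2 \<in> F \<times> F" "dt u1 u2 \<noteq> 0" "v = hclass F (lat_span nv F u1 u2)"
    using vert_lattice[OF SF Ls edge_verts(1)[OF e(1)]] by blast
  obtain u1' u2' where u': "u1' \<in> F \<times> F" "u2' \<in> F \<times> F" "dt u1' u2' \<noteq> 0" "v' = hclass F (lat_span nv F u1' u2')"
    using vert_lattice[OF SF Ls edge_verts(2)[OF e(1)]] by blast
  have img: "pact (\<delta> j) v = v \<or> pact (\<delta> j) v = v'" for j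
  proof -
    have "pact (\<delta> j) v \<in> pact (\<delta> j) ` sg" unfolding e(2) by simp
    then show ?thesis using st unfolding e(2) by auto
  qed
  have "infinite {j. pact (\<delta> j) v = v} \<or> infinite {j. pact (\<delta> j) v = v'}"
  proof (rule ccontr)
    assume "\<not> ?thesis"
    then have "finite ({j. pact (\<delta> j) v = v} \<union> {j. pact (\<delta> j) v = v'})" by simp
    moreover have "{j. pact (\<delta> j) v = v} \<union> {j. pact (\<delta> j) v = v'} = UNIV" using img by blast
    ultimately show False by simp
  qed
  then show ?thesis
  proof
    assume "infinite {j. pact (\<delta> j) v = v}"
    then obtain r0 where r0: "strict_mono (r0 :: nat \<Rightarrow> nat)" "\<forall>j. pact (\<delta> (r0 j)) v = v"
      using inf_subseq[of "\<lambda>j. pact (\<delta> j) v = v"] by blast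
    have "\<forall>j. pact ((\<delta> \<circ> r0) j) (hclass F (lat_span nv F u1 u2)) = hclass F (lat_span nv F u1 u2)"
      using r0(2) u(4) by simp
    moreover have "\<forall>j. (\<delta> \<circ> r0) j \<in> pgl2 F" using del by simp
    ultimately obtain r t where rt: "strict_mono (r :: nat \<Rightarrow> nat)"
      "p1_tendsto nv (\<lambda>j. pmob ((\<delta> \<circ> r0) (r j)) (Some w)) (Some t)" "t \<notin> F"
      using key_seq[OF w u(1,2) u(1,2) u(3) u(3)] by blast
    have "strict_mono (r0 \<circ> r)" using r0(1) rt(1) by (rule strict_mono_o)
    moreover have "p1_tendsto nv (\<lambda>j. pmob (\<delta> ((r0 \<circ> r) j)) (Some w)) (Some t)" using rt(2) by simp
    ultimately show ?thesis using rt(3) by blast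
  next
    assume "infinite {j. pact (\<delta> j) v = v'}"
    then obtain r0 where r0: "strict_mono (r0 :: nat \<Rightarrow> nat)" "\<forall>j. pact (\<delta> (r0 j)) v = v'"
      using inf_subseq[of "\<lambda>j. pact (\<delta> j) v = v'"] by blast
    have "\<forall>j. pact ((\<delta> \<circ> r0) j) (hclass F (lat_span nv F u1 u2)) = hclass F (lat_span nv F u1' u2')"
      using r0(2) u(4) u'(4) by simp
    moreover have "\<forall>j. (\<delta> \<circ> r0) j \<in> pgl2 F" using del by simp
    ultimately obtain r t where rt: "strict_mono (r :: nat \<Rightarrow> nat)"
      "p1_tendsto nv (\<lambda>j. pmob ((\<delta> \<circ> r0) (r j)) (Some w)) (Some t)" "t \<notin> F"
      using key_seq[OF w u(1,2) u'(1,2) u(3) u'(3)] by blast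
    have "strict_mono (r0 \<circ> r)" using r0(1) rt(1) by (rule strict_mono_o)
    moreover have "p1_tendsto nv (\<lambda>j. pmob (\<delta> ((r0 \<circ> r) j)) (Some w)) (Some t)" using rt(2) by simp
    ultimately show ?thesis using rt(3) by blast
  qed
qed

end

theorem lemma2p18:
  fixes nv :: "'c::field \<Rightarrow> real" and p :: nat and S :: "'s set"
    and F :: "'s \<Rightarrow> 'c set" and \<Gamma> :: "('s \<Rightarrow> 'c mat2 set) set"
    and Lp :: "'s \<Rightarrow> 'c option set" and \<sigma> :: "'s \<Rightarrow> ('c \<times> 'c) set set set"
  assumes "is_C nv p"
    and "finite S" and "S \<noteq> {}"
    and "\<forall>s\<in>S. local_subfield nv (F s)"
    and "pgl_subgroup S F \<Gamma>"
    and "semisimple_plectic_with nv S F \<Gamma> Lp"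
    and "polysimplex nv S F Lp \<sigma>"
  shows "finite (stabilizer S \<Gamma> Lp \<sigma>)"
proof (rule ccontr)
  assume inf: "infinite (stabilizer S \<Gamma> Lp \<sigma>)"
  have NA: "nonarch_abs nv" and VC: "v_complete nv"
    and AC: "\<forall>f::'c poly. degree f > 0 \<longrightarrow> (\<exists>z. poly f z = 0)"
    using assms(1) unfolding is_C_def by auto
  have LFs: "lfield nv (F s)" if "s \<in> S" for s
    unfolding lfield_def lfield_axioms_def nav_def using NA VC assms(4) that by auto
  have SFs: "subfield (F s)" if "s \<in> S" for s
    using assms(4) that unfolding local_subfield_def by auto
  have "\<forall>s\<in>S. \<exists>w. w \<notin> F s" using lfield.exists_notin[OF LFs AC] by blast
  then obtain wf where wf: "\<forall>s\<in>S. wf s \<notin> F s" by metis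
  define y where "y s = (if Lp s = {} then None else Some (wf s))" for s
  obtain \<gamma> :: "nat \<Rightarrow> 's \<Rightarrow> 'c mat2 set" where \<gamma>: "inj \<gamma>" "range \<gamma> \<subseteq> stabilizer S \<Gamma> Lp \<sigma>"
    using infinite_countable_subset[OF inf] by blast
  have \<gamma>\<Gamma>: "\<gamma> j \<in> \<Gamma>" for j using \<gamma>(2) unfolding stabilizer_def by blast
  have \<gamma>st: "pact (\<gamma> j s) ` \<sigma> s = \<sigma> s" if "s \<in> S" "Lp s \<noteq> {}" for j s
    using \<gamma>(2) that unfolding stabilizer_def by blast
  have \<gamma>pgl: "\<gamma> j s \<in> pgl2 (F s)" if "s \<in> S" for j s
    using \<gamma>\<Gamma>[of j] assms(5) that unfolding pgl_subgroup_def pglS_def by blast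
  have LpP1: "Lp s \<subseteq> P1 (F s)" if "s \<in> S" for s
    using assms(6) that unfolding semisimple_plectic_with_def by blast
  have coord: "\<exists>r' l. strict_mono (r' :: nat \<Rightarrow> nat) \<and> p1_tendsto nv (\<lambda>j. pmob (\<gamma> (r0 (r' j)) s) (y s)) l \<and> l \<notin> Lp s"
    if s: "s \<in> S" and r0: "strict_mono (r0 :: nat \<Rightarrow> nat)" for s r0
  proof (cases "Lp s = {}")
    case True
    then have ys: "y s = None" unfolding y_def by simp
    have "range (\<lambda>j. pmob (\<gamma> (r0 j) s) (y s)) \<subseteq> P1 (F s)"
    proof
      fix z assume "z \<in> range (\<lambda>j. pmob (\<gamma> (r0 j) s) (y s))"
      then obtain j where z: "z = pmob (\<gamma> (r0 j) s) (y s)" by blast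
      have "None \<in> P1 (F s)" unfolding P1_def by simp
      then show "z \<in> P1 (F s)" unfolding z ys using pmob_P1[OF SFs[OF s] \<gamma>pgl[OF s]] by blast
    qed
    from lfield.P1_seqcompact[OF LFs[OF s] this] obtain r' l where
      rl: "strict_mono (r' :: nat \<Rightarrow> nat)" "p1_tendsto nv ((\<lambda>j. pmob (\<gamma> (r0 j) s) (y s)) \<circ> r') l" by blast
    have "p1_tendsto nv (\<lambda>j. pmob (\<gamma> (r0 (r' j)) s) (y s)) l" using rl(2) by (simp add: o_def)
    then show ?thesis using rl(1) True by blast
  next
    case False
    then have ys: "y s = Some (wf s)" unfolding y_def by simp
    have sig: "(\<exists>v. v \<in> tree_verts nv (F s) (Lp s) \<and> \<sigma> s = {v}) \<or> (\<exists>v w. tree_edge nv (F s) (Lp s) v w \<and> \<sigma> s = {v, w})"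
      using assms(7) s False unfolding polysimplex_def by blast
    have del: "\<forall>j. \<gamma> (r0 j) s \<in> pgl2 (F s)" using \<gamma>pgl[OF s] by blast
    have st: "\<forall>j. pact (\<gamma> (r0 j) s) ` \<sigma> s = \<sigma> s" using \<gamma>st[OF s False] by blast
    obtain r' t where rt: "strict_mono (r' :: nat \<Rightarrow> nat)"
      "p1_tendsto nv (\<lambda>j. pmob (\<gamma> (r0 (r' j)) s) (Some (wf s))) (Some t)" "t \<notin> F s"
      using lfield.coord_lemma[OF LFs[OF s] wf[rule_format, OF s] LpP1[OF s] sig del st] by blast
    have "Some t \<notin> Lp s" using rt(3) LpP1[OF s] unfolding P1_def by auto
    then show ?thesis using rt(1,2) ys by metis
  qed
  have ind: "T \<subseteq> S \<Longrightarrow> \<exists>r x. strict_mono (r :: nat \<Rightarrow> nat) \<and>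
      (\<forall>s\<in>T. p1_tendsto nv (\<lambda>j. pmob (\<gamma> (r j) s) (y s)) (x s) \<and> x s \<notin> Lp s)"
    if "finite T" for T
    using that
  proof (induction T rule: finite_induct)
    case empty
    have "strict_mono (id :: nat \<Rightarrow> nat)" by (simp add: strict_mono_def)
    then show ?case by blast
  next
    case (insert s T)
    then obtain r x where rx: "strict_mono (r :: nat \<Rightarrow> nat)"
      "\<forall>s\<in>T. p1_tendsto nv (\<lambda>j. pmob (\<gamma> (r j) s) (y s)) (x s) \<and> x s \<notin> Lp s" by auto
    have sS: "s \<in> S" using insert.prems by simp
    obtain r' l where rl: "strict_mono (r' :: nat \<Rightarrow> nat)"
      "p1_tendsto nv (\<lambda>j. pmob (\<gamma> (r (r' j)) s) (y s)) l" "l \<notin> Lp s"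
      using coord[OF sS rx(1)] by blast
    have smr: "strict_mono (r \<circ> r')" using rx(1) rl(1) by (rule strict_mono_o)
    have "\<forall>s'\<in>insert s T. p1_tendsto nv (\<lambda>j. pmob (\<gamma> ((r \<circ> r') j) s') (y s')) ((x(s := l)) s') \<and> (x(s := l)) s' \<notin> Lp s'"
    proof
      fix s' assume s': "s' \<in> insert s T"
      show "p1_tendsto nv (\<lambda>j. pmob (\<gamma> ((r \<circ> r') j) s') (y s')) ((x(s := l)) s') \<and> (x(s := l)) s' \<notin> Lp s'"
      proof (cases "s' = s")
        case True
        then show ?thesis using rl(2,3) by simp
      next
        case False
        then have s'T: "s' \<in> T" using s' by simp
        have "p1_tendsto nv ((\<lambda>j. pmob (\<gamma> (r j) s') (y s')) \<circ> r') (x s')"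
          using p1_tendsto_subseq[OF _ rl(1)] rx(2) s'T by blast
        then show ?thesis using False rx(2) s'T by (simp add: o_def)
      qed
    qed
    then show ?case using smr by blast
  qed
  obtain r x where rx: "strict_mono (r :: nat \<Rightarrow> nat)"
      "\<forall>s\<in>S. p1_tendsto nv (\<lambda>j. pmob (\<gamma> (r j) s) (y s)) (x s) \<and> x s \<notin> Lp s"
    using ind[OF assms(2) subset_refl] by blast
  define x' where "x' s = (if s \<in> S then x s else None)" for s
  have injr: "inj (\<gamma> \<circ> r)" using \<gamma>(1) strict_mono_imp_inj_on[OF rx(1)] by (simp add: inj_compose)
  have rng: "range (\<gamma> \<circ> r) \<subseteq> \<Gamma>" using \<gamma>\<Gamma> by auto
  have conv: "\<forall>s\<in>S. p1_tendsto nv (\<lambda>j. pmob ((\<gamma> \<circ> r) j s) (y s)) (x' s)"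
    using rx(2) unfolding x'_def by simp
  have "x' \<in> limset nv S \<Gamma>" unfolding limset_def
  proof (intro CollectI conjI)
    show "\<forall>s. s \<notin> S \<longrightarrow> x' s = None" unfolding x'_def by simp
    show "\<exists>y \<gamma>. inj (\<gamma> :: nat \<Rightarrow> 's \<Rightarrow> 'c mat2 set) \<and> range \<gamma> \<subseteq> \<Gamma> \<and>
        (\<forall>s\<in>S. p1_tendsto nv (\<lambda>j. pmob (\<gamma> j s) (y s)) (x' s))"
      using injr rng conv by blast
  qed
  then have "\<exists>s\<in>S. x' s \<in> Lp s" using assms(6) unfolding semisimple_plectic_with_def by blast
  then show False using rx(2) unfolding x'_def by auto
qed

end
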